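(* Let $m,n\in\mathbb{N}$, $T=\{1,\dots,m\}$, $\mathcal{F}(A,b)=\{x\in\mathbb{R}^n\mid Ax\le b\}$ for $(A,b)\in\mathbb{R}^{m\times n}\times\mathbb{R}^m$, and let $(\bar A,\bar b)$ be such that $\mathcal{F}(\bar A,\bar b)$ is nonempty and bounded. Then $$\operatorname{Lipusc}\mathcal{F}(\bar A,\bar b)=\max_{x\in\mathcal{E}(\bar A,\bar b)}\left((\|x\|+1)\max_{D\in\mathcal{D}_{\bar A,\bar b}(x)}\Big[\operatorname{dist}_*\big(0_n,\operatorname{conv}\{\bar a_t,\ t\in D\}\big)\Big]^{-1}\right).$$
   Context: $\bar a_t'$ is the $t$-th row of $\bar A$. $\mathcal{E}(\bar A,\bar b):=\operatorname{extr}\big(\mathcal{F}(\bar A,\bar b)\cap\operatorname{span}\{\bar a_t,\ t\in T\}\big)$ (set of extreme points). $T_{\bar A,\bar b}(x)=\{t\in T\mid\bar a_t'x=\bar b_t\}$. $\mathcal{D}_{\bar A,\bar b}(x)$ is the family of all $D\subset T_{\bar A,\bar b}(x)$ for which the system $\bar a_t'd=1$ ($t\in D$), $\bar a_t'd<1$ ($t\in T_{\bar A,\bar b}(x)\setminus D$) in $d\in\mathbb{R}^n$ is consistent. $\mathbb{R}^n$ carries an arbitrary norm $\|\cdot\|$ with dual norm $\|u\|_*=\max_{\|x\|\le1}|u'x|$, and $\operatorname{dist}_*(0_n,C)=\inf_{u\in C}\|u\|_*$, with $\operatorname{conv}\emptyset=\emptyset$, $\inf\emptyset=+\infty$ and $(+\infty)^{-1}=0$.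 The parameter space carries the norm $\|(A,b)\|=\max_{t\in T}\max\{\|a_t\|_*,|b_t|\}$. $\operatorname{Lipusc}\mathcal{F}(\bar A,\bar b)$ is the infimum of all $\kappa\ge0$ for which there is a neighborhood $V$ of $(\bar A,\bar b)$ with $\inf_{z\in\mathcal{F}(\bar A,\bar b)}\|x-z\|\le\kappa\|(A,b)-(\bar A,\bar b)\|$ for all $(A,b)\in V$ and all $x\in\mathcal{F}(A,b)$. *)

theory Defs
  imports "HOL-Analysis.Analysis"
begin

definition is_norm :: "(real^'n \<Rightarrow> real) \<Rightarrow> bool" where
  "is_norm N \<longleftrightarrow> (\<forall>x. 0 \<le> N x) \<and> (\<forall>x. N x = 0 \<longleftrightarrow> x = 0) \<and>
     (\<forall>c x. N (c *\<^sub>R x) = \<bar>c\<bar> * N x) \<and> (\<forall>x y. N (x + y) \<le> N x + N y)"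

definition dual_norm :: "(real^'n \<Rightarrow> real) \<Rightarrow> real^'n \<Rightarrow> real" where
  "dual_norm N u = Sup {\<bar>u \<bullet> x\<bar> | x. N x \<le> 1}"

definition feas :: "real^'n^'m \<Rightarrow> real^'m \<Rightarrow> (real^'n) set" where
  "feas A b = {x. \<forall>t. (A $ t) \<bullet> x \<le> b $ t}"

definition param_norm :: "(real^'n \<Rightarrow> real) \<Rightarrow> real^'n^'m \<Rightarrow> real^'m \<Rightarrow> real" where
  "param_norm N A b = Max ((\<lambda>t. max (dual_norm N (A $ t)) \<bar>b $ t\<bar>) ` UNIV)"

text \<open>Lipschitz upper semicontinuity modulus (value in [0,+\<infinity>], Inf of empty set = +\<infinity>).\<close>
definition Lipusc :: "(real^'n \<Rightarrow> real) \<Rightarrow> real^'n^'m \<Rightarrow> real^'m \<Rightarrow> ereal" where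
  "Lipusc N Ab bb = Inf {ereal \<kappa> | \<kappa>. 0 \<le> \<kappa> \<and>
     (\<exists>\<epsilon>>0. \<forall>A b. param_norm N (A - Ab) (b - bb) < \<epsilon> \<longrightarrow>
        (\<forall>x \<in> feas A b. Inf {N (x - z) | z. z \<in> feas Ab bb} \<le> \<kappa> * param_norm N (A - Ab) (b - bb)))}"

definition active :: "real^'n^'m \<Rightarrow> real^'m \<Rightarrow> real^'n \<Rightarrow> 'm set" where
  "active A b x = {t. (A $ t) \<bullet> x = b $ t}"

definition Dfam :: "real^'n^'m \<Rightarrow> real^'m \<Rightarrow> real^'n \<Rightarrow> 'm set set" where
  "Dfam A b x = {D. D \<subseteq> active A b x \<and>
     (\<exists>d. (\<forall>t\<in>D. (A $ t) \<bullet> d = 1) \<and> (\<forall>t \<in> active A b x - D. (A $ t) \<bullet> d < 1))}"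

definition Eset :: "real^'n^'m \<Rightarrow> real^'m \<Rightarrow> (real^'n) set" where
  "Eset A b = {x. x extreme_point_of (feas A b \<inter> span (range (\<lambda>t. A $ t)))}"

text \<open>[dist_*(0, conv C)]^{-1} with conv {} = {}, inf {} = +\<infinity>, (+\<infinity>)^{-1} = 0.\<close>
definition inv_dist_conv :: "(real^'n \<Rightarrow> real) \<Rightarrow> (real^'n) set \<Rightarrow> real" where
  "inv_dist_conv N C = (if C = {} then 0
      else inverse (Inf {dual_norm N u | u. u \<in> convex hull C}))"

end

theory Submission
  imports Defs
begin

definition cone_comb :: "('i \<Rightarrow> 'a::real_vector) \<Rightarrow> 'i set \<Rightarrow> 'a set" where
  "cone_comb c I = {(\<Sum>t\<in>I. l t *\<^sub>R c t) | l. \<forall>t\<in>I. 0 \<le> l t}"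

lemma convex_cone_sum_mem:
  assumes "convex_cone S" "finite I" "\<forall>t\<in>I. f t \<in> S"
  shows "sum f I \<in> S"
  using assms(2,3)
proof (induction I rule: finite_induct)
  case empty then show ?case using assms(1) by (simp add: convex_cone_iff)
next
  case (insert a I) then show ?case using assms(1) by (simp add: convex_cone_iff)
qed

lemma cone_comb_hull:
  assumes "finite I"
  shows "cone_comb c I = convex_cone hull (c ` I)"
proof
  show "cone_comb c I \<subseteq> convex_cone hull (c ` I)"
  proof
    fix y assume "y \<in> cone_comb c I"
    then obtain l where l: "\<forall>t\<in>I. 0 \<le> l t" "y = (\<Sum>t\<in>I. l t *\<^sub>R c t)"
      unfolding cone_comb_def by blast
    have "\<forall>t\<in>I. l t *\<^sub>R c t \<in> convex_cone hull (c ` I)"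
    proof
      fix t assume "t \<in> I"
      then have "c t \<in> convex_cone hull (c ` I)" by (simp add: hull_inc)
      then show "l t *\<^sub>R c t \<in> convex_cone hull (c ` I)"
        using convex_cone_hull_mul l(1) \<open>t \<in> I\<close> by blast
    qed
    then have "(\<Sum>t\<in>I. l t *\<^sub>R c t) \<in> convex_cone hull (c ` I)"
      by (rule convex_cone_sum_mem[OF convex_cone_convex_cone_hull assms])
    then show "y \<in> convex_cone hull (c ` I)" using l by simp
  qed
  show "convex_cone hull (c ` I) \<subseteq> cone_comb c I"
  proof (rule hull_minimal)
    show "c ` I \<subseteq> cone_comb c I"
    proof
      fix y assume "y \<in> c ` I"
      then obtain t where t: "t \<in> I" "y = c t" by blast
      have "(\<Sum>s\<in>I. (if s = t then 1 else 0) *\<^sub>R c s) = c t"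
      proof -
        have "(\<Sum>s\<in>I. (if s = t then 1 else 0) *\<^sub>R c s) = (\<Sum>s\<in>I. if s = t then c s else 0)"
          by (rule sum.cong) auto
        also have "\<dots> = c t" using t assms by (simp add: sum.delta)
        finally show ?thesis .
      qed
      then show "y \<in> cone_comb c I" unfolding cone_comb_def using t
        by (intro CollectI exI[of _ "\<lambda>s. if s = t then 1 else 0"]) auto
    qed
    show "convex_cone (cone_comb c I)"
      unfolding convex_cone_iff
    proof (intro conjI ballI allI impI)
      show "0 \<in> cone_comb c I" unfolding cone_comb_def
        by (intro CollectI exI[of _ "\<lambda>s. 0"]) auto
    next
      fix x y assume "x \<in> cone_comb c I" "y \<in> cone_comb c I"
      then obtain l1 l2 where "\<forall>t\<in>I. 0 \<le> l1 t" "x = (\<Sum>t\<in>I. l1 t *\<^sub>R c t)"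
        "\<forall>t\<in>I. 0 \<le> l2 t" "y = (\<Sum>t\<in>I. l2 t *\<^sub>R c t)" unfolding cone_comb_def by blast
      then show "x + y \<in> cone_comb c I" unfolding cone_comb_def
        by (intro CollectI exI[of _ "\<lambda>s. l1 s + l2 s"]) (auto simp: scaleR_add_left sum.distrib)
    next
      fix x and k :: real assume "x \<in> cone_comb c I" "0 \<le> k"
      then obtain l1 where "\<forall>t\<in>I. 0 \<le> l1 t" "x = (\<Sum>t\<in>I. l1 t *\<^sub>R c t)"
        unfolding cone_comb_def by blast
      then show "k *\<^sub>R x \<in> cone_comb c I" unfolding cone_comb_def using \<open>0 \<le> k\<close>
        by (intro CollectI exI[of _ "\<lambda>s. k * l1 s"]) (auto simp: scaleR_sum_right)
    qed
  qed
qed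

lemma farkas:
  fixes c :: "'i \<Rightarrow> 'a::euclidean_space"
  assumes "finite I" "y \<notin> cone_comb c I"
  shows "\<exists>w. (\<forall>t\<in>I. 0 \<le> w \<bullet> c t) \<and> w \<bullet> y < 0"
proof -
  let ?K = "cone_comb c I"
  have K: "?K = convex_cone hull (c ` I)" by (rule cone_comb_hull[OF assms(1)])
  have cl: "closed ?K" unfolding K by (rule closed_convex_cone_hull) (use assms in simp)
  have cv: "convex ?K" unfolding K by (rule convex_convex_cone_hull)
  have cc: "conic ?K" unfolding K by (rule conic_convex_cone_hull)
  obtain a b where ab: "a \<bullet> y < b" "\<forall>x\<in>?K. b < a \<bullet> x"
    using separating_hyperplane_closed_point[OF cv cl assms(2)] by blast
  have "0 \<in> ?K" unfolding K by (rule convex_cone_hull_contains_0)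
  then have b0: "b < 0" using ab(2) by auto
  have "0 \<le> a \<bullet> c t" if "t \<in> I" for t
  proof (rule ccontr)
    assume "\<not> 0 \<le> a \<bullet> c t"
    then have neg: "a \<bullet> c t < 0" by simp
    have "c t \<in> ?K" unfolding K using that by (simp add: hull_inc)
    then have "(b / (a \<bullet> c t)) *\<^sub>R c t \<in> ?K" using cc neg b0
      by (intro conicD) (auto simp: divide_nonpos_neg)
    then have "b < a \<bullet> ((b / (a \<bullet> c t)) *\<^sub>R c t)" using ab(2) by blast
    then show False using neg by simp
  qed
  then show ?thesis using ab(1) b0 by (intro exI[of _ a]) auto
qed

lemma lp_lemma:
  fixes c :: "'i \<Rightarrow> 'a::euclidean_space"
  assumes fin: "finite I" and a: "a \<in> cone_comb c I"
  shows "\<exists>D d l. D \<subseteq> I \<and> (\<forall>t\<in>D. c t \<bullet> d = 1) \<and> (\<forall>t\<in>I - D. c t \<bullet> d < 1)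
     \<and> (\<forall>t\<in>D. 0 \<le> l t) \<and> a = (\<Sum>t\<in>D. l t *\<^sub>R c t)"
proof -
  define g where "g = (\<lambda>t. (c t, 1::real))"
  let ?C = "cone_comb g I"
  have memC: "(p, s) \<in> ?C \<longleftrightarrow> (\<exists>l. (\<forall>t\<in>I. 0 \<le> l t) \<and> p = (\<Sum>t\<in>I. l t *\<^sub>R c t) \<and> s = sum l I)"
    for p s
    unfolding cone_comb_def g_def by (auto simp: sum_prod)
  define S where "S = {s. (a, s) \<in> ?C}"
  have clC: "closed ?C" unfolding cone_comb_hull[OF fin] by (rule closed_convex_cone_hull) (use fin in simp)
  have "S = (\<lambda>s. (a, s)) -` ?C" unfolding S_def by auto
  then have clS: "closed S" using clC
    by (simp add: continuous_closed_vimage continuous_Pair)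
  obtain l0 where l0: "\<forall>t\<in>I. 0 \<le> l0 t" "a = (\<Sum>t\<in>I. l0 t *\<^sub>R c t)"
    using a unfolding cone_comb_def by blast
  have Sne: "S \<noteq> {}" unfolding S_def using memC l0 by blast
  have Sbdd: "bdd_below S"
    unfolding bdd_below_def S_def using memC by (auto intro!: exI[of _ 0] sum_nonneg)
  define m where "m = Inf S"
  have "m \<in> S" unfolding m_def by (rule closed_contains_Inf[OF Sne Sbdd clS])
  then obtain ls where ls: "\<forall>t\<in>I. 0 \<le> ls t" "a = (\<Sum>t\<in>I. ls t *\<^sub>R c t)" "m = sum ls I"
    unfolding S_def using memC by blast
  have minim: "m \<le> sum l I" if "\<forall>t\<in>I. 0 \<le> l t" "a = (\<Sum>t\<in>I. l t *\<^sub>R c t)" for l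
  proof -
    have "sum l I \<in> S" unfolding S_def using memC that by blast
    then show ?thesis unfolding m_def by (rule cInf_lower[OF _ Sbdd])
  qed
  define h where "h = (\<lambda>j. case j of None \<Rightarrow> (- a, - m) | Some t \<Rightarrow> (c t, 1::real))"
  define J where "J = insert None (Some ` I)"
  have finJ: "finite J" unfolding J_def using fin by simp
  have sumJ: "(\<Sum>j\<in>J. f j) = f None + (\<Sum>t\<in>I. f (Some t))" for f :: "'i option \<Rightarrow> 'a \<times> real"
    unfolding J_def using fin by (simp add: sum.reindex)
  have notin: "(0, -1) \<notin> cone_comb h J"
  proof
    assume "(0, -1) \<in> cone_comb h J"
    then obtain l where l: "\<forall>j\<in>J. 0 \<le> l j" "(0, -1) = (\<Sum>j\<in>J. l j *\<^sub>R h j)"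
      unfolding cone_comb_def by blast
    define lam where "lam = (\<lambda>t. l (Some t))"
    have lam0: "\<forall>t\<in>I. 0 \<le> lam t" using l(1) unfolding J_def lam_def by auto
    have l00: "0 \<le> l None" using l(1) unfolding J_def by auto
    have "(0, -1) = l None *\<^sub>R (- a, - m) + (\<Sum>t\<in>I. lam t *\<^sub>R (c t, 1))"
      using l(2) unfolding sumJ h_def lam_def by simp
    then have e1: "0 = - (l None *\<^sub>R a) + (\<Sum>t\<in>I. lam t *\<^sub>R c t)"
      and e2: "-1 = - (l None * m) + sum lam I"
      by (auto simp: sum_prod)
    show False
    proof (cases "l None = 0")
      case True
      then have "sum lam I = -1" using e2 by simp
      moreover have "0 \<le> sum lam I" using lam0 by (simp add: sum_nonneg)
      ultimately show False by simp
    next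
      case False
      then have lp: "l None > 0" using l00 by simp
      define lam' where "lam' = (\<lambda>t. lam t / l None)"
      have "a = (\<Sum>t\<in>I. lam' t *\<^sub>R c t)"
      proof -
        have "l None *\<^sub>R a = (\<Sum>t\<in>I. lam t *\<^sub>R c t)" using e1 by (simp add: algebra_simps)
        moreover have "a = inverse (l None) *\<^sub>R (l None *\<^sub>R a)" using lp by simp
        ultimately have "a = inverse (l None) *\<^sub>R (\<Sum>t\<in>I. lam t *\<^sub>R c t)" by simp
        then show ?thesis unfolding lam'_def by (simp add: scaleR_sum_right divide_inverse mult.commute)
      qed
      moreover have "\<forall>t\<in>I. 0 \<le> lam' t" using lam0 lp unfolding lam'_def by simp
      ultimately have "m \<le> sum lam' I" by (rule minim[rotated])
      also have "sum lam' I = sum lam I / l None" unfolding lam'_def by (simp add: sum_divide_distrib)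
      also have "\<dots> = m - 1 / l None" using e2 lp by (simp add: field_simps)
      finally show False using lp by simp
    qed
  qed
  obtain w where w: "\<forall>j\<in>J. 0 \<le> w \<bullet> h j" "w \<bullet> (0, -1) < 0"
    using farkas[OF finJ notin] by blast
  obtain wa \<sigma> where wsp: "w = (wa, \<sigma>)" by (cases w)
  have sp: "\<sigma> > 0" using w(2) wsp by simp
  have hS: "0 \<le> wa \<bullet> c t + \<sigma>" if "t \<in> I" for t
    using w(1) that unfolding J_def h_def wsp by auto
  have hN: "0 \<le> - (wa \<bullet> a) - \<sigma> * m"
    using w(1) unfolding J_def h_def wsp by auto
  define d where "d = (- inverse \<sigma>) *\<^sub>R wa"
  have cd: "c t \<bullet> d \<le> 1" if "t \<in> I" for t
  proof -
    have "c t \<bullet> d = - (wa \<bullet> c t) / \<sigma>" unfolding d_def by (simp add: inner_commute divide_inverse)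
    also have "\<dots> \<le> 1" using hS[OF that] sp by (simp add: field_simps)
    finally show ?thesis .
  qed
  have ad: "m \<le> a \<bullet> d"
  proof -
    have "a \<bullet> d = - (wa \<bullet> a) / \<sigma>" unfolding d_def by (simp add: inner_commute divide_inverse)
    moreover have "m \<le> - (wa \<bullet> a) / \<sigma>" using hN sp by (simp add: field_simps)
    ultimately show ?thesis by simp
  qed
  have ad2: "a \<bullet> d = (\<Sum>t\<in>I. ls t * (c t \<bullet> d))"
    unfolding ls(2) by (simp add: inner_sum_left)
  have "(\<Sum>t\<in>I. ls t * (1 - c t \<bullet> d)) = m - a \<bullet> d"
    unfolding ad2 ls(3) by (simp add: algebra_simps sum_subtractf)
  then have s0: "(\<Sum>t\<in>I. ls t * (1 - c t \<bullet> d)) \<le> 0" using ad by simp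
  have nn: "\<forall>t\<in>I. 0 \<le> ls t * (1 - c t \<bullet> d)" using ls(1) cd by simp
  have s00: "0 \<le> (\<Sum>t\<in>I. ls t * (1 - c t \<bullet> d))" using nn by (simp add: sum_nonneg)
  have zero: "\<forall>t\<in>I. ls t * (1 - c t \<bullet> d) = 0"
    using sum_nonneg_eq_0_iff[OF fin, of "\<lambda>t. ls t * (1 - c t \<bullet> d)"] nn s0 s00 by simp
  define D where "D = {t\<in>I. c t \<bullet> d = 1}"
  have "D \<subseteq> I" unfolding D_def by auto
  moreover have "\<forall>t\<in>D. c t \<bullet> d = 1" unfolding D_def by auto
  moreover have "\<forall>t\<in>I - D. c t \<bullet> d < 1" unfolding D_def using cd by force
  moreover have "a = (\<Sum>t\<in>D. ls t *\<^sub>R c t)"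
  proof -
    have "(\<Sum>t\<in>D. ls t *\<^sub>R c t) = (\<Sum>t\<in>I. ls t *\<^sub>R c t)"
    proof (rule sum.mono_neutral_left[OF fin \<open>D \<subseteq> I\<close>])
      show "\<forall>t\<in>I - D. ls t *\<^sub>R c t = 0" using zero unfolding D_def by auto
    qed
    then show ?thesis using ls(2) by simp
  qed
  moreover have "\<forall>t\<in>D. 0 \<le> ls t" using ls(1) unfolding D_def by auto
  ultimately show ?thesis by blast
qed

lemma exists_small:
  fixes \<sigma> K :: "'i \<Rightarrow> real"
  assumes "finite A" "\<forall>t\<in>A. 0 < \<sigma> t"
  shows "\<exists>e>0. \<forall>t\<in>A. \<forall>e'. 0 \<le> e' \<longrightarrow> e' \<le> e \<longrightarrow> e' * K t < \<sigma> t"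
  using assms
proof (induction A rule: finite_induct)
  case empty then show ?case by (intro exI[of _ 1]) auto
next
  case (insert a A)
  then obtain e0 where e0: "e0 > 0" "\<forall>t\<in>A. \<forall>e'. 0 \<le> e' \<longrightarrow> e' \<le> e0 \<longrightarrow> e' * K t < \<sigma> t" by auto
  have sa: "\<sigma> a > 0" using insert by auto
  define e1 where "e1 = \<sigma> a / (\<bar>K a\<bar> + 1)"
  have e1: "e1 > 0" unfolding e1_def using sa by simp
  have "e' * K a < \<sigma> a" if "0 \<le> e'" "e' \<le> e1" for e'
  proof -
    have "e' * K a \<le> e' * \<bar>K a\<bar>" using that by (simp add: mult_left_mono)
    also have "\<dots> \<le> e1 * \<bar>K a\<bar>" using that by (simp add: mult_right_mono)
    also have "\<dots> < \<sigma> a" unfolding e1_def using sa by (simp add: field_simps)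
    finally show ?thesis .
  qed
  then show ?case using e0 e1 by (intro exI[of _ "min e0 e1"]) auto
qed

lemma Dfam_empty: "{} \<in> Dfam A b x"
  unfolding Dfam_def by (auto intro!: exI[of _ 0])

lemma finite_Dfam: "finite (Dfam (A :: real^'n^'m::finite) b x)"
  by (rule finite_subset[of _ "Pow UNIV"]) auto

lemma conv_hull_dot_const:
  assumes "\<forall>t\<in>D. (A $ t) \<bullet> d = 1" "u \<in> convex hull ((\<lambda>t. A $ t) ` D)"
  shows "u \<bullet> d = 1"
proof -
  have "convex hull ((\<lambda>t. A $ t) ` D) \<subseteq> {u. d \<bullet> u = 1}"
    by (rule hull_minimal) (use assms(1) convex_hyperplane[of d 1] in \<open>auto simp: inner_commute\<close>)
  then show ?thesis using assms(2) by (auto simp: inner_commute)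
qed

lemma conv_hull_dot_ge:
  assumes "\<forall>t\<in>D. 0 \<le> (A $ t) \<bullet> v" "u \<in> convex hull ((\<lambda>t. A $ t) ` D)"
  shows "0 \<le> u \<bullet> v"
proof -
  have "convex hull ((\<lambda>t. A $ t) ` D) \<subseteq> {u. v \<bullet> u \<ge> 0}"
    by (rule hull_minimal) (use assms(1) convex_halfspace_ge[of 0 v] in \<open>auto simp: inner_commute\<close>)
  then show ?thesis using assms(2) by (auto simp: inner_commute)
qed

context
  fixes N :: "real^'n::finite \<Rightarrow> real"
  assumes N: "is_norm N"
begin

lemma N_nonneg: "0 \<le> N x" using N by (simp add: is_norm_def)
lemma N_zero_iff: "N x = 0 \<longleftrightarrow> x = 0" using N by (simp add: is_norm_def)
lemma N_scale: "N (c *\<^sub>R x) = \<bar>c\<bar> * N x" using N by (simp add: is_norm_def)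
lemma N_triangle: "N (x + y) \<le> N x + N y" using N by (simp add: is_norm_def)
lemma N_0[simp]: "N 0 = 0" using N_zero_iff by simp
lemma N_minus: "N (- x) = N x"
  using N_scale[of "-1" x] by simp
lemma N_commute: "N (x - y) = N (y - x)"
  using N_minus[of "x - y"] by simp
lemma N_pos: "x \<noteq> 0 \<Longrightarrow> 0 < N x"
  using N_nonneg N_zero_iff by (metis order_le_less)
lemma N_diff_tri: "N (x - z) \<le> N (x - y) + N (y - z)"
  using N_triangle[of "x - y" "y - z"] by simp
lemma N_rev_tri: "N x \<le> N y + N (x - y)"
  using N_triangle[of y "x - y"] by simp

lemma N_sum: "finite S \<Longrightarrow> N (sum f S) \<le> (\<Sum>i\<in>S. N (f i))"
proof (induction S rule: finite_induct)
  case empty then show ?case by simp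
next
  case (insert a S)
  then show ?case using N_triangle[of "f a" "sum f S"] by simp
qed

lemma N_upper: "\<exists>C>0. \<forall>x. N x \<le> C * norm x"
proof -
  define C where "C = (\<Sum>i\<in>(Basis::(real^'n) set). N i) + 1"
  have "0 \<le> (\<Sum>i\<in>(Basis::(real^'n) set). N i)" by (rule sum_nonneg) (simp add: N_nonneg)
  then have C0: "0 < C" unfolding C_def by linarith
  have "N x \<le> C * norm x" for x
  proof -
    have "N x = N (\<Sum>i\<in>Basis. (x \<bullet> i) *\<^sub>R i)" by (simp add: euclidean_representation)
    also have "\<dots> \<le> (\<Sum>i\<in>Basis. N ((x \<bullet> i) *\<^sub>R i))" by (rule N_sum) simp
    also have "\<dots> = (\<Sum>i\<in>Basis. \<bar>x \<bullet> i\<bar> * N i)" by (simp add: N_scale)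
    also have "\<dots> \<le> (\<Sum>i\<in>Basis. norm x * N i)"
      by (intro sum_mono mult_right_mono) (auto simp: Basis_le_norm N_nonneg)
    also have "\<dots> = norm x * (\<Sum>i\<in>Basis. N i)" by (simp add: sum_distrib_left)
    also have "\<dots> \<le> C * norm x" unfolding C_def by (simp add: algebra_simps)
    finally show ?thesis .
  qed
  with C0 show ?thesis by blast
qed

lemma N_lipschitz: "\<exists>C>0. \<forall>x y. \<bar>N x - N y\<bar> \<le> C * norm (x - y)"
proof -
  obtain C where C: "C > 0" "\<forall>x. N x \<le> C * norm x" using N_upper by blast
  have "\<bar>N x - N y\<bar> \<le> C * norm (x - y)" for x y
  proof -
    have "N x \<le> N y + N (x - y)" by (rule N_rev_tri)
    moreover have "N y \<le> N x + N (y - x)" by (rule N_rev_tri)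
    moreover have "N (x - y) \<le> C * norm (x - y)" using C(2) by blast
    moreover have "N (y - x) \<le> C * norm (x - y)"
      using C(2)[rule_format, of "y - x"] by (simp add: norm_minus_commute)
    ultimately show ?thesis by linarith
  qed
  with C show ?thesis by blast
qed

lemma N_continuous: "continuous_on S N"
proof -
  obtain C where C: "C > 0" "\<forall>x y. \<bar>N x - N y\<bar> \<le> C * norm (x - y)" using N_lipschitz by blast
  show ?thesis
    unfolding continuous_on_iff
  proof (intro ballI allI impI)
    fix x e assume "x \<in> S" "(0::real) < e"
    show "\<exists>d>0. \<forall>x'\<in>S. dist x' x < d \<longrightarrow> dist (N x') (N x) < e"
    proof (intro exI[of _ "e / C"] conjI ballI impI)
      show "0 < e / C" using C \<open>0 < e\<close> by simp
      fix y assume "y \<in> S" "dist y x < e / C"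
      then have "C * norm (y - x) < e" using C by (simp add: dist_norm field_simps)
      then show "dist (N y) (N x) < e" using C(2)[rule_format, of y x] by (simp add: dist_real_def)
    qed
  qed
qed

lemma N_continuous_comp: "continuous_on S f \<Longrightarrow> continuous_on S (\<lambda>x. N (f x))"
  using continuous_on_compose2[OF N_continuous[of UNIV] _ subset_UNIV] by blast

lemma N_lower: "\<exists>c>0. \<forall>x. c * norm x \<le> N x"
proof -
  let ?S = "sphere (0::real^'n) 1"
  have "?S \<noteq> {}" by simp
  obtain x0 where x0: "x0 \<in> ?S" "\<forall>y\<in>?S. N x0 \<le> N y"
    using continuous_attains_inf[OF compact_sphere \<open>?S \<noteq> {}\<close> N_continuous] by blast
  have x0nz: "x0 \<noteq> 0" using x0(1) by auto
  define c where "c = N x0"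
  have c0: "c > 0" unfolding c_def using N_pos x0nz by simp
  have "c * norm x \<le> N x" for x
  proof (cases "x = 0")
    case True then show ?thesis by simp
  next
    case False
    then have "(inverse (norm x)) *\<^sub>R x \<in> ?S" by (simp add: norm_scaleR)
    then have "c \<le> N ((inverse (norm x)) *\<^sub>R x)" using x0 c_def by blast
    also have "\<dots> = N x / norm x" using False by (simp add: N_scale field_simps)
    finally show ?thesis using False by (simp add: field_simps)
  qed
  with c0 show ?thesis by blast
qed

lemma N_convex: "convex {y. N (y - x) < r}" "convex {y. N y \<le> r}"
proof -
  show "convex {y. N (y - x) < r}"
  proof (rule convexI)
    fix a b u v :: real and p q :: "real^'n"
    assume p: "p \<in> {y. N (y - x) < r}" and q: "q \<in> {y. N (y - x) < r}"
      and uv: "0 \<le> u" "0 \<le> v" "u + v = 1"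
    have "u *\<^sub>R p + v *\<^sub>R q - x = u *\<^sub>R (p - x) + v *\<^sub>R (q - x)"
      using uv(3) by (simp add: algebra_simps flip: scaleR_add_left)
    then have "N (u *\<^sub>R p + v *\<^sub>R q - x) \<le> u * N (p - x) + v * N (q - x)"
      using N_triangle[of "u *\<^sub>R (p - x)" "v *\<^sub>R (q - x)"] uv by (simp add: N_scale)
    also have "\<dots> < r"
    proof (cases "u = 0")
      case True then show ?thesis using uv q by simp
    next
      case False
      then have "u * N (p - x) < u * r" using uv p by simp
      moreover have "v * N (q - x) \<le> v * r" using uv q by (simp add: mult_left_mono)
      ultimately show ?thesis using uv(3) by (simp add: algebra_simps) (metis add.commute add_less_le_mono distrib_left mult.right_neutral)
    qed
    finally show "u *\<^sub>R p + v *\<^sub>R q \<in> {y. N (y - x) < r}" by simp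
  qed
  show "convex {y. N y \<le> r}"
  proof (rule convexI)
    fix u v :: real and p q :: "real^'n"
    assume p: "p \<in> {y. N y \<le> r}" and q: "q \<in> {y. N y \<le> r}"
      and uv: "0 \<le> u" "0 \<le> v" "u + v = 1"
    have "N (u *\<^sub>R p + v *\<^sub>R q) \<le> u * N p + v * N q"
      using N_triangle[of "u *\<^sub>R p" "v *\<^sub>R q"] uv by (simp add: N_scale)
    also have "\<dots> \<le> u * r + v * r" using uv p q by (simp add: add_mono mult_left_mono)
    also have "\<dots> = r" using uv(3) by (simp flip: distrib_right)
    finally show "u *\<^sub>R p + v *\<^sub>R q \<in> {y. N y \<le> r}" by simp
  qed
qed

abbreviation "dn \<equiv> dual_norm N"

lemma dn_set_ne: "{\<bar>u \<bullet> x\<bar> | x. N x \<le> 1} \<noteq> {}"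
  by (rule ex_in_conv[THEN iffD1], rule exI[of _ 0]) (auto intro!: exI[of _ 0])

lemma dn_bdd: "bdd_above {\<bar>u \<bullet> x\<bar> | x. N x \<le> 1}"
proof -
  obtain c where c: "c > 0" "\<forall>x. c * norm x \<le> N x" using N_lower by blast
  have "\<bar>u \<bullet> x\<bar> \<le> norm u / c" if "N x \<le> 1" for x
  proof -
    have "norm x \<le> 1 / c" using c that by (smt (verit) mult.commute pos_le_divide_eq)
    then have "norm u * norm x \<le> norm u * (1 / c)" by (intro mult_left_mono) auto
    then show ?thesis using Cauchy_Schwarz_ineq2[of u x] by simp
  qed
  then show ?thesis unfolding bdd_above_def by blast
qed

lemma dn_upper: "N x \<le> 1 \<Longrightarrow> \<bar>u \<bullet> x\<bar> \<le> dn u"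
  unfolding dual_norm_def by (rule cSup_upper[OF _ dn_bdd]) blast

lemma dn_least: "(\<And>x. N x \<le> 1 \<Longrightarrow> \<bar>u \<bullet> x\<bar> \<le> K) \<Longrightarrow> dn u \<le> K"
  unfolding dual_norm_def by (rule cSup_least[OF dn_set_ne]) blast

lemma dn_nonneg: "0 \<le> dn u"
  using dn_upper[of 0 u] by simp

lemma dn_ineq: "\<bar>u \<bullet> x\<bar> \<le> dn u * N x"
proof (cases "x = 0")
  case True then show ?thesis by simp
next
  case False
  then have Np: "N x > 0" by (rule N_pos)
  have "N (inverse (N x) *\<^sub>R x) \<le> 1" using Np by (simp add: N_scale)
  then have "\<bar>u \<bullet> (inverse (N x) *\<^sub>R x)\<bar> \<le> dn u" by (rule dn_upper)
  then show ?thesis using Np by (simp add: field_simps abs_mult)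
qed

lemma dn_ineq': "u \<bullet> x \<le> dn u * N x"
  using dn_ineq[of u x] by linarith

lemma dn_pos: "u \<noteq> 0 \<Longrightarrow> 0 < dn u"
proof -
  assume "u \<noteq> 0"
  then have "0 < u \<bullet> u" by simp
  also have "\<dots> \<le> dn u * N u" by (rule dn_ineq')
  finally have "0 < dn u * N u" .
  then show ?thesis using dn_nonneg N_nonneg[of u] by (simp add: zero_less_mult_iff)
qed

lemma dn_scale_le: "dn (c *\<^sub>R u) \<le> \<bar>c\<bar> * dn u"
proof (rule dn_least)
  fix x assume "N x \<le> 1"
  then have "\<bar>u \<bullet> x\<bar> \<le> dn u" by (rule dn_upper)
  then show "\<bar>(c *\<^sub>R u) \<bullet> x\<bar> \<le> \<bar>c\<bar> * dn u" by (simp add: abs_mult mult_left_mono)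
qed

lemma dn_scale: "dn (c *\<^sub>R u) = \<bar>c\<bar> * dn u"
proof (cases "c = 0")
  case True then show ?thesis using dn_scale_le[of 0 u] dn_nonneg[of 0] by simp
next
  case False
  have "dn u = dn (inverse c *\<^sub>R (c *\<^sub>R u))" using False by simp
  also have "\<dots> \<le> \<bar>inverse c\<bar> * dn (c *\<^sub>R u)" by (rule dn_scale_le)
  finally have "\<bar>c\<bar> * dn u \<le> dn (c *\<^sub>R u)" using False
    by (simp add: field_simps abs_inverse) 
  with dn_scale_le[of c u] show ?thesis by linarith
qed

lemma dn_minus: "dn (- u) = dn u"
  using dn_scale[of "-1" u] by simp

lemma norming: "\<eta> > 0 \<Longrightarrow> \<exists>w. dn w \<le> 1 \<and> N x - \<eta> \<le> w \<bullet> x"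
proof (cases "x = 0")
  case True
  assume "\<eta> > 0"
  then show ?thesis using True by (intro exI[of _ 0]) (simp add: dn_scale[of 0 0, simplified])
next
  case False
  assume eta: "\<eta> > 0"
  have Np: "N x > 0" using False by (rule N_pos)
  define B where "B = {y. N y \<le> 1}"
  have cB: "convex B" unfolding B_def by (rule N_convex)
  have clB: "closed B" unfolding B_def
    by (rule closed_Collect_le[OF N_continuous continuous_on_const])
  define k where "k = (N x + \<eta>) / N x"
  have k1: "k > 1" unfolding k_def using Np eta by (simp add: field_simps)
  define p where "p = (k / N x) *\<^sub>R x"
  have Np': "N p = k" unfolding p_def using Np k1 by (simp add: N_scale)
  then have "p \<notin> B" using k1 unfolding B_def by simp
  then obtain a b where ab: "a \<bullet> p < b" "\<forall>y\<in>B. b < a \<bullet> y"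
    using separating_hyperplane_closed_point[OF cB clB] by blast
  define w where "w = - a"
  have 0: "0 \<in> B" unfolding B_def by simp
  have "b < 0" using ab(2) 0 by auto
  have wy: "\<bar>w \<bullet> y\<bar> < - b" if "y \<in> B" for y
  proof -
    have "- y \<in> B" using that unfolding B_def by (simp add: N_minus)
    then show ?thesis using ab(2) that unfolding w_def by (auto simp: abs_less_iff)
  qed
  have wp: "w \<bullet> p > - b" using ab(1) unfolding w_def by simp
  have dnw: "dn w \<le> - b" by (rule dn_least) (use wy B_def in fastforce)
  have "w \<noteq> 0" using wp \<open>b < 0\<close> by auto
  then have dnp: "dn w > 0" by (rule dn_pos)
  define w' where "w' = inverse (dn w) *\<^sub>R w"
  have "dn w' = 1" unfolding w'_def using dnp by (simp add: dn_scale)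
  moreover have "w' \<bullet> p > 1"
  proof -
    have "dn w < w \<bullet> p" using dnw wp by linarith
    then show ?thesis unfolding w'_def using dnp by (simp add: field_simps)
  qed
  moreover have "w' \<bullet> p = (k / N x) * (w' \<bullet> x)" unfolding p_def by simp
  ultimately have "1 < (k / N x) * (w' \<bullet> x)" by simp
  then have "N x / k < w' \<bullet> x" using k1 Np by (simp add: field_simps)
  moreover have "N x / k = N x * N x / (N x + \<eta>)" unfolding k_def using Np eta by simp
  moreover have "N x - \<eta> \<le> N x * N x / (N x + \<eta>)"
    using Np eta by (simp add: field_simps)
  ultimately show ?thesis using \<open>dn w' = 1\<close> by (intro exI[of _ w']) simp
qed

lemma inv_dist_conv_nonneg: "0 \<le> inv_dist_conv N C"
proof (cases "C = {}")
  case True then show ?thesis by (simp add: inv_dist_conv_def)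
next
  case False
  then have "convex hull C \<noteq> {}" by simp
  then have "{dn u | u. u \<in> convex hull C} \<noteq> {}" by blast
  then have "0 \<le> Inf {dn u | u. u \<in> convex hull C}"
    by (rule cInf_greatest) (auto simp: dn_nonneg)
  then show ?thesis using False by (simp add: inv_dist_conv_def)
qed

lemma alpha_props:
  fixes A :: "real^'n^'m::finite"
  assumes "D \<noteq> {}" "\<forall>t\<in>D. (A $ t) \<bullet> d = 1"
  defines "\<alpha> \<equiv> Inf {dn u | u. u \<in> convex hull ((\<lambda>t. A $ t) ` D)}"
  shows "0 < \<alpha>" "\<And>u. u \<in> convex hull ((\<lambda>t. A $ t) ` D) \<Longrightarrow> \<alpha> \<le> dn u"
    "inv_dist_conv N ((\<lambda>t. A $ t) ` D) = inverse \<alpha>"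
    "\<And>u. u \<in> convex hull ((\<lambda>t. A $ t) ` D) \<Longrightarrow> u \<bullet> d = 1"
proof -
  let ?C = "convex hull ((\<lambda>t. A $ t) ` D)"
  have ne: "{dn u | u. u \<in> ?C} \<noteq> {}" using assms(1) by auto
  have u1: "u \<bullet> d = 1" if "u \<in> ?C" for u by (rule conv_hull_dot_const[OF assms(2) that])
  then show "\<And>u. u \<in> ?C \<Longrightarrow> u \<bullet> d = 1" .
  obtain u0 where "u0 \<in> ?C" using ne by blast
  then have "1 \<le> dn u0 * N d" using u1[of u0] dn_ineq'[of u0 d] by simp
  then have Nd: "N d > 0" using dn_nonneg[of u0] N_nonneg[of d]
    by (metis mult_zero_right not_one_le_zero order_less_le)
  have lb: "1 / N d \<le> dn u" if "u \<in> ?C" for u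
  proof -
    have "1 \<le> dn u * N d" using u1[OF that] dn_ineq'[of u d] by simp
    then show ?thesis using Nd by (simp add: field_simps)
  qed
  have "1 / N d \<le> \<alpha>" unfolding \<alpha>_def by (rule cInf_greatest[OF ne]) (use lb in auto)
  then show "0 < \<alpha>" using Nd by (smt (verit) divide_pos_pos)
  show "\<And>u. u \<in> ?C \<Longrightarrow> \<alpha> \<le> dn u" unfolding \<alpha>_def
    by (rule cInf_lower) (auto intro!: bdd_belowI[of _ 0] dn_nonneg)
  show "inv_dist_conv N ((\<lambda>t. A $ t) ` D) = inverse \<alpha>"
    using assms(1) unfolding inv_dist_conv_def \<alpha>_def by simp
qed

lemma lower_bound:
  fixes Ab :: "real^'n^'m::finite" and bb :: "real^'m"
  assumes xF: "xb \<in> feas Ab bb" and DD: "D \<in> Dfam Ab bb xb" and k0: "0 \<le> \<kappa>" and e0: "\<epsilon> > 0"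
    and V: "\<forall>A b. param_norm N (A - Ab) (b - bb) < \<epsilon> \<longrightarrow>
        (\<forall>x \<in> feas A b. Inf {N (x - z) | z. z \<in> feas Ab bb} \<le> \<kappa> * param_norm N (A - Ab) (b - bb))"
  shows "(N xb + 1) * inv_dist_conv N ((\<lambda>t. Ab $ t) ` D) \<le> \<kappa>"
proof (cases "D = {}")
  case True then show ?thesis using k0 by (simp add: inv_dist_conv_def)
next
  case Dne: False
  obtain d where Dact: "D \<subseteq> active Ab bb xb" and d1: "\<forall>t\<in>D. (Ab $ t) \<bullet> d = 1"
    and d2: "\<forall>t \<in> active Ab bb xb - D. (Ab $ t) \<bullet> d < 1"
    using DD unfolding Dfam_def by blast
  let ?C = "convex hull ((\<lambda>t. Ab $ t) ` D)"
  define \<alpha> where "\<alpha> = Inf {dn u | u. u \<in> ?C}"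
  have a0: "0 < \<alpha>" and alow: "\<And>u. u \<in> ?C \<Longrightarrow> \<alpha> \<le> dn u"
    and ainv: "inv_dist_conv N ((\<lambda>t. Ab $ t) ` D) = inverse \<alpha>"
    and ud: "\<And>u. u \<in> ?C \<Longrightarrow> u \<bullet> d = 1"
    using alpha_props[OF Dne d1] unfolding \<alpha>_def by auto
  have Cne: "?C \<noteq> {}" using Dne by simp
  have xbF: "\<forall>t. (Ab $ t) \<bullet> xb \<le> bb $ t" using xF unfolding feas_def by simp
  define nx where "nx = N xb"
  define nd where "nd = N d"
  have nx0: "0 \<le> nx" "0 \<le> nd" unfolding nx_def nd_def by (auto simp: N_nonneg)
  have main: "nx + 1 \<le> \<kappa> * \<alpha>"
  proof (rule ccontr)
    assume "\<not> nx + 1 \<le> \<kappa> * \<alpha>"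
    define \<eta> where "\<eta> = (nx + 1 - \<kappa> * \<alpha>) / 2"
    have eta0: "\<eta> > 0" unfolding \<eta>_def using \<open>\<not> nx + 1 \<le> \<kappa> * \<alpha>\<close> by simp
    obtain w where w1: "dn w \<le> 1" and w2: "N xb - \<eta> \<le> w \<bullet> xb" using norming[OF eta0] by blast
    define \<beta> where "\<beta> = 1 + nx - \<eta>"
    have beta_eq: "\<beta> = \<kappa> * \<alpha> + \<eta>" unfolding \<beta>_def \<eta>_def by (simp add: field_simps)
    have ka0: "0 \<le> \<kappa> * \<alpha>" using k0 a0 by simp
    have b0: "\<beta> > 0" using beta_eq ka0 eta0 by simp
    have wd: "\<bar>w \<bullet> d\<bar> \<le> nd"
    proof -
      have "dn w * nd \<le> 1 * nd" by (rule mult_right_mono[OF w1 nx0(2)])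
      then show ?thesis using dn_ineq[of w d] unfolding nd_def by simp
    qed
    have wx: "\<bar>w \<bullet> xb\<bar> \<le> nx"
    proof -
      have "dn w * nx \<le> 1 * nx" by (rule mult_right_mono[OF w1 nx0(1)])
      then show ?thesis using dn_ineq[of w xb] unfolding nx_def by simp
    qed
    define Ina where "Ina = {t. (Ab $ t) \<bullet> xb \<noteq> bb $ t}"
    define \<sigma> where "\<sigma> = (\<lambda>t. bb $ t - (Ab $ t) \<bullet> xb)"
    define K where "K = (\<lambda>t. \<beta> * \<bar>(Ab $ t) \<bullet> d\<bar> + nx + \<beta> * nd)"
    have "\<forall>t\<in>Ina. 0 < \<sigma> t"
    proof
      fix t assume "t \<in> Ina"
      then have "(Ab $ t) \<bullet> xb \<noteq> bb $ t" unfolding Ina_def by simp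
      moreover have "(Ab $ t) \<bullet> xb \<le> bb $ t" using xbF by simp
      ultimately show "0 < \<sigma> t" unfolding \<sigma>_def by simp
    qed
    then obtain e1 where e1: "e1 > 0" "\<forall>t\<in>Ina. \<forall>e'. 0 \<le> e' \<longrightarrow> e' \<le> e1 \<longrightarrow> e' * K t < \<sigma> t"
      using exists_small[of Ina \<sigma> K] by auto
    define e where "e = min (min e1 1) (min (\<epsilon> / 2) (\<eta> / (\<kappa> * \<alpha> * nd + 1)))"
    have kand: "0 \<le> \<kappa> * \<alpha> * nd" using ka0 nx0 by simp
    have e_pos: "e > 0" unfolding e_def using e1 e0 eta0 kand by simp
    have e_le1: "e \<le> 1" "e \<le> e1" unfolding e_def by auto
    have e_eps: "e < \<epsilon>" unfolding e_def using e0 by linarith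
    have e_eta: "e * (\<kappa> * \<alpha> * nd) < \<eta>"
    proof -
      have "e \<le> \<eta> / (\<kappa> * \<alpha> * nd + 1)" unfolding e_def by linarith
      then have "e * (\<kappa> * \<alpha> * nd + 1) \<le> \<eta>" using kand by (simp add: field_simps)
      then show ?thesis using e_pos by (simp add: algebra_simps)
    qed
    define A' :: "real^'n^'m" where "A' = (\<chi> t. Ab $ t - e *\<^sub>R w)"
    define b' :: "real^'m" where "b' = (\<chi> t. bb $ t + e)"
    have pn: "param_norm N (A' - Ab) (b' - bb) = e"
    proof -
      have eqf: "(\<lambda>t. max (dn ((A' - Ab) $ t)) \<bar>(b' - bb) $ t\<bar>) = (\<lambda>t. e)"
      proof
        fix t
        have "dn ((A' - Ab) $ t) = dn (- (e *\<^sub>R w))" unfolding A'_def by simp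
        also have "\<dots> = e * dn w" using e_pos by (simp add: dn_minus dn_scale)
        also have "\<dots> \<le> e" using w1 e_pos by (simp add: mult_le_cancel_left1)
        finally show "max (dn ((A' - Ab) $ t)) \<bar>(b' - bb) $ t\<bar> = e"
          unfolding b'_def using e_pos by simp
      qed
      show ?thesis unfolding param_norm_def eqf by simp
    qed
    define s where "s = e * \<beta> / (1 + e * nd)"
    have s0: "s > 0" unfolding s_def using e_pos b0 nx0 by (simp add: add_pos_nonneg)
    have "1 + e * nd > 0" using e_pos nx0 by (simp add: add_pos_nonneg)
    then have s_eq: "s * (1 + e * nd) = e * \<beta>" unfolding s_def by simp
    have s_le: "s \<le> e * \<beta>"
    proof -
      have "s * 1 \<le> s * (1 + e * nd)" using s0 e_pos nx0 by (intro mult_left_mono) auto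
      then show ?thesis using s_eq by simp
    qed
    define x where "x = xb + s *\<^sub>R d"
    have xfeas: "x \<in> feas A' b'"
      unfolding feas_def
    proof (intro CollectI allI)
      fix t
      have expand: "(A' $ t) \<bullet> x = (Ab $ t) \<bullet> xb + s * ((Ab $ t) \<bullet> d) - e * (w \<bullet> xb) - e * s * (w \<bullet> d)"
        unfolding A'_def x_def by (simp add: inner_diff_left inner_add_right algebra_simps)
      have t3: "- (e * s * (w \<bullet> d)) \<le> e * s * nd"
      proof -
        have "- (w \<bullet> d) \<le> nd" using wd by linarith
        then have "e * s * (- (w \<bullet> d)) \<le> e * s * nd" using e_pos s0 by (intro mult_left_mono) auto
        then show ?thesis by simp
      qed
      show "(A' $ t) \<bullet> x \<le> b' $ t"
      proof (cases "t \<in> Ina")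
        case False
        then have act: "(Ab $ t) \<bullet> xb = bb $ t" unfolding Ina_def by simp
        then have "t \<in> active Ab bb xb" unfolding active_def by simp
        then have ad1: "(Ab $ t) \<bullet> d \<le> 1" using d1 d2 by (cases "t \<in> D") (auto simp: less_imp_le)
        have t1: "s * ((Ab $ t) \<bullet> d) \<le> s" using mult_left_mono[OF ad1, of s] s0 by simp
        have t2: "e * (nx - \<eta>) \<le> e * (w \<bullet> xb)" using w2 e_pos unfolding nx_def
          by (intro mult_left_mono) auto
        have "s + e * s * nd = e * \<beta>" using s_eq by (simp add: algebra_simps)
        then have "s * ((Ab $ t) \<bullet> d) - e * (w \<bullet> xb) - e * s * (w \<bullet> d) \<le> e"
          using t1 t2 t3 unfolding \<beta>_def by (simp add: algebra_simps)
        then show ?thesis unfolding b'_def using expand act by simp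
      next
        case True
        have t1: "s * ((Ab $ t) \<bullet> d) \<le> e * \<beta> * \<bar>(Ab $ t) \<bullet> d\<bar>"
        proof -
          have "s * ((Ab $ t) \<bullet> d) \<le> s * \<bar>(Ab $ t) \<bullet> d\<bar>" using s0 by (intro mult_left_mono) auto
          also have "\<dots> \<le> e * \<beta> * \<bar>(Ab $ t) \<bullet> d\<bar>" using s_le by (intro mult_right_mono) auto
          finally show ?thesis .
        qed
        have t2: "- (e * (w \<bullet> xb)) \<le> e * nx"
        proof -
          have "- (w \<bullet> xb) \<le> nx" using wx by linarith
          then have "e * (- (w \<bullet> xb)) \<le> e * nx" using e_pos by (intro mult_left_mono) auto
          then show ?thesis by simp
        qed
        have t4: "e * s * nd \<le> e * \<beta> * nd"
        proof -
          have "e * s \<le> 1 * (e * \<beta>)" using s_le e_le1 e_pos s0 b0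
            by (intro mult_mono) auto
          then show ?thesis using nx0 by (intro mult_right_mono) auto
        qed
        have "e * K t < \<sigma> t" using e1(2) True e_pos e_le1 by auto
        then have "s * ((Ab $ t) \<bullet> d) - e * (w \<bullet> xb) - e * s * (w \<bullet> d) < \<sigma> t"
          using t1 t2 t3 t4 unfolding K_def by (simp add: algebra_simps)
        then show ?thesis unfolding b'_def \<sigma>_def using expand e_pos by simp
      qed
    qed
    have "Inf {N (x - z) | z. z \<in> feas Ab bb} \<le> \<kappa> * e"
      using V[rule_format, of A' b'] pn e_eps xfeas by simp
    moreover have "s / \<alpha> \<le> Inf {N (x - z) | z. z \<in> feas Ab bb}"
    proof (rule cInf_greatest)
      show "{N (x - z) | z. z \<in> feas Ab bb} \<noteq> {}" using xF by blast
    next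
      fix r assume "r \<in> {N (x - z) | z. z \<in> feas Ab bb}"
      then obtain z where zF: "z \<in> feas Ab bb" and r: "r = N (x - z)" by blast
      have su: "s \<le> dn u * N (x - z)" if "u \<in> ?C" for u
      proof -
        have "\<forall>t\<in>D. 0 \<le> (Ab $ t) \<bullet> (xb - z)"
        proof
          fix t assume "t \<in> D"
          then have "(Ab $ t) \<bullet> xb = bb $ t" using Dact unfolding active_def by auto
          moreover have "(Ab $ t) \<bullet> z \<le> bb $ t" using zF unfolding feas_def by simp
          ultimately show "0 \<le> (Ab $ t) \<bullet> (xb - z)" by (simp add: inner_diff_right)
        qed
        then have "0 \<le> u \<bullet> (xb - z)" by (rule conv_hull_dot_ge[OF _ that])
        moreover have "u \<bullet> (x - z) = u \<bullet> (xb - z) + s * (u \<bullet> d)"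
          unfolding x_def by (simp add: inner_diff_right inner_add_right)
        ultimately have "s \<le> u \<bullet> (x - z)" using ud[OF that] by simp
        also have "\<dots> \<le> dn u * N (x - z)" by (rule dn_ineq')
        finally show ?thesis .
      qed
      obtain u0 where "u0 \<in> ?C" using Cne by blast
      have Npos: "N (x - z) > 0"
        using su[OF \<open>u0 \<in> ?C\<close>] s0 dn_nonneg[of u0] N_nonneg[of "x - z"]
        by (metis mult_zero_right not_less order_le_less)
      have "s / N (x - z) \<le> \<alpha>" unfolding \<alpha>_def
      proof (rule cInf_greatest)
        show "{dn u | u. u \<in> ?C} \<noteq> {}" using Cne by blast
      next
        fix y assume "y \<in> {dn u | u. u \<in> ?C}"
        then obtain u where "u \<in> ?C" "y = dn u" by blast
        then show "s / N (x - z) \<le> y" using su[of u] Npos by (simp add: field_simps)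
      qed
      then have "s \<le> \<alpha> * N (x - z)" using Npos by (simp add: field_simps)
      then show "s / \<alpha> \<le> r" unfolding r using a0 by (simp add: field_simps)
    qed
    ultimately have "s / \<alpha> \<le> \<kappa> * e" by linarith
    then have "s \<le> \<kappa> * e * \<alpha>" using a0 by (simp add: field_simps)
    moreover have "0 \<le> 1 + e * nd" using nx0 e_pos by simp
    ultimately have "s * (1 + e * nd) \<le> (\<kappa> * e * \<alpha>) * (1 + e * nd)"
      by (rule mult_right_mono)
    then have "e * \<beta> \<le> e * (\<kappa> * \<alpha> * (1 + e * nd))"
      using s_eq by (simp add: algebra_simps)
    then have "\<beta> \<le> \<kappa> * \<alpha> * (1 + e * nd)" using e_pos
      by (rule mult_le_cancel_left_pos[THEN iffD1, rotated])
    then have "\<beta> \<le> \<kappa> * \<alpha> + e * (\<kappa> * \<alpha> * nd)" by (simp add: algebra_simps)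
    then show False using e_eta beta_eq by simp
  qed
  show ?thesis unfolding ainv nx_def[symmetric] using main a0
    by (simp add: field_simps)
qed

lemma convex_feas: "convex (feas A b)"
  unfolding convex_def feas_def
proof (intro ballI allI impI CollectI)
  fix x y and u v :: real and t
  assume x: "x \<in> {x. \<forall>t. A $ t \<bullet> x \<le> b $ t}" and y: "y \<in> {x. \<forall>t. A $ t \<bullet> x \<le> b $ t}"
    and uv: "0 \<le> u" "0 \<le> v" "u + v = 1"
  have "u * (A $ t \<bullet> x) \<le> u * b $ t" using x uv by (simp add: mult_left_mono)
  moreover have "v * (A $ t \<bullet> y) \<le> v * b $ t" using y uv by (simp add: mult_left_mono)
  ultimately have "u * (A $ t \<bullet> x) + v * (A $ t \<bullet> y) \<le> (u + v) * b $ t" by (simp add: algebra_simps)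
  then show "A $ t \<bullet> (u *\<^sub>R x + v *\<^sub>R y) \<le> b $ t" using uv by (simp add: inner_add_right)
qed

lemma closed_feas: "closed (feas A b)"
proof -
  have "feas A b = (\<Inter>t. {x. A $ t \<bullet> x \<le> b $ t})" unfolding feas_def by auto
  then show ?thesis by (auto intro!: closed_INT closed_halfspace_le)
qed

definition Hf :: "real^'n^'m::finite \<Rightarrow> real^'m \<Rightarrow> real^'n \<Rightarrow> real" where
  "Hf Ab bb z = Max {inv_dist_conv N ((\<lambda>t. Ab $ t) ` D) | D. D \<in> Dfam Ab bb z}"

lemma Hf_ge: "D \<in> Dfam Ab bb z \<Longrightarrow> inv_dist_conv N ((\<lambda>t. Ab $ t) ` D) \<le> Hf Ab bb z"
  unfolding Hf_def
  by (rule Max_ge) (auto simp: Setcompr_eq_image finite_Dfam)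

lemma Hf_nonneg: "0 \<le> Hf Ab bb z"
  using Hf_ge[OF Dfam_empty] inv_dist_conv_nonneg by (meson order_trans)

lemma error_bound:
  fixes Ab :: "real^'n^'m::finite" and bb :: "real^'m"
  assumes Fne: "feas Ab bb \<noteq> {}" and Fc: "compact (feas Ab bb)"
    and g: "\<forall>t. (Ab $ t) \<bullet> x - bb $ t \<le> \<gamma>" and g0: "0 \<le> \<gamma>"
  shows "\<exists>z\<in>feas Ab bb. Inf {N (x - z') | z'. z' \<in> feas Ab bb} = N (x - z)
           \<and> N (x - z) \<le> Hf Ab bb z * \<gamma>"
proof -
  let ?F = "feas Ab bb"
  have cont: "continuous_on ?F (\<lambda>z. N (x - z))"
    by (intro N_continuous_comp continuous_intros)
  obtain z where zF: "z \<in> ?F" and zmin: "\<forall>y\<in>?F. N (x - z) \<le> N (x - y)"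
    using continuous_attains_inf[OF Fc Fne cont] by blast
  have infeq: "Inf {N (x - z') | z'. z' \<in> ?F} = N (x - z)"
    by (rule cInf_eq_minimum) (use zF zmin in auto)
  define \<rho> where "\<rho> = N (x - z)"
  have bound: "\<rho> \<le> Hf Ab bb z * \<gamma>"
  proof (cases "\<rho> = 0")
    case True then show ?thesis using Hf_nonneg[of Ab bb z] g0 by simp
  next
    case False
    then have rho0: "\<rho> > 0" unfolding \<rho>_def using N_nonneg[of "x - z"] by simp
    define T where "T = {y. N (y - x) < \<rho>}"
    have cT: "convex T" unfolding T_def by (rule N_convex)
    have "x \<in> T" unfolding T_def using rho0 by simp
    then have Tne: "T \<noteq> {}" by blast
    have disj: "?F \<inter> T = {}"
    proof (rule ccontr)
      assume "?F \<inter> T \<noteq> {}"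
      then obtain y where "y \<in> ?F" "N (y - x) < \<rho>" unfolding T_def by auto
      then show False using zmin N_commute[of y x] unfolding \<rho>_def by force
    qed
    obtain a0 b0 where a0: "a0 \<noteq> 0" and aF: "\<forall>w\<in>?F. a0 \<bullet> w \<le> b0" and aT: "\<forall>y\<in>T. b0 \<le> a0 \<bullet> y"
      using separating_hyperplane_sets[OF convex_feas cT Fne Tne disj] by blast
    have b0z: "b0 \<le> a0 \<bullet> z"
    proof (rule ccontr)
      assume "\<not> b0 \<le> a0 \<bullet> z"
      define c where "c = a0 \<bullet> (x - z)"
      define \<theta> where "\<theta> = min 1 ((b0 - a0 \<bullet> z) / (\<bar>c\<bar> + 1))"
      have th0: "\<theta> > 0" "\<theta> \<le> 1" unfolding \<theta>_def using \<open>\<not> b0 \<le> a0 \<bullet> z\<close> by auto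
      have thc: "\<theta> * c < b0 - a0 \<bullet> z"
      proof -
        have "\<theta> * c \<le> \<theta> * \<bar>c\<bar>" using th0 by (intro mult_left_mono) auto
        also have "\<dots> \<le> (b0 - a0 \<bullet> z) / (\<bar>c\<bar> + 1) * \<bar>c\<bar>" unfolding \<theta>_def
          by (intro mult_right_mono) auto
        also have "\<dots> < b0 - a0 \<bullet> z" using \<open>\<not> b0 \<le> a0 \<bullet> z\<close> by (simp add: field_simps)
        finally show ?thesis .
      qed
      define y where "y = z + \<theta> *\<^sub>R (x - z)"
      have "y - x = (1 - \<theta>) *\<^sub>R (z - x)" unfolding y_def by (simp add: algebra_simps)
      then have "N (y - x) = (1 - \<theta>) * \<rho>" using th0 unfolding \<rho>_def by (simp add: N_scale N_commute[of z x])
      also have "\<dots> < \<rho>" using th0 rho0 by (simp add: algebra_simps)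
      finally have "y \<in> T" unfolding T_def by simp
      then have "b0 \<le> a0 \<bullet> y" using aT by blast
      moreover have "a0 \<bullet> y = a0 \<bullet> z + \<theta> * c" unfolding y_def c_def by (simp add: inner_add_right)
      ultimately show False using thc by simp
    qed
    have normal: "\<forall>w\<in>?F. a0 \<bullet> w \<le> a0 \<bullet> z" using aF b0z by force
    have dnrho: "\<rho> * dn a0 \<le> a0 \<bullet> (x - z)"
    proof -
      have "dn a0 \<le> a0 \<bullet> (x - z) / \<rho>"
      proof (rule dn_least)
        fix v assume v1: "N v \<le> 1"
        have "\<rho> * \<bar>a0 \<bullet> v\<bar> \<le> a0 \<bullet> (x - z)"
        proof (rule field_le_mult_one_interval)
          fix \<theta> :: real assume th: "0 < \<theta>" "\<theta> < 1"
          have inT: "x + (s * \<theta> * \<rho>) *\<^sub>R v \<in> T" if "\<bar>s\<bar> = 1" for s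
          proof -
            have "N ((s * \<theta> * \<rho>) *\<^sub>R v) = \<theta> * \<rho> * N v" using that th rho0
              by (simp add: N_scale abs_mult)
            also have "\<dots> \<le> \<theta> * \<rho>" using v1 th rho0 by (simp add: mult_le_cancel_left1)
            also have "\<dots> < \<rho>" using th rho0 by simp
            finally show ?thesis unfolding T_def by simp
          qed
          have azb: "a0 \<bullet> z \<le> b0" using aF zF by blast
          have p: "a0 \<bullet> z \<le> a0 \<bullet> x + (s * \<theta> * \<rho>) * (a0 \<bullet> v)" if "\<bar>s\<bar> = 1" for s
          proof -
            have "b0 \<le> a0 \<bullet> (x + (s * \<theta> * \<rho>) *\<^sub>R v)" using aT inT[OF that] by blast
            then show ?thesis using azb by (simp add: inner_add_right)
          qed
          have "\<theta> * (\<rho> * (a0 \<bullet> v)) \<le> a0 \<bullet> (x - z)" using p[of "-1"] by (simp add: inner_diff_right algebra_simps)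
          moreover have "\<theta> * (\<rho> * (- (a0 \<bullet> v))) \<le> a0 \<bullet> (x - z)" using p[of 1] by (simp add: inner_diff_right algebra_simps)
          ultimately show "\<theta> * (\<rho> * \<bar>a0 \<bullet> v\<bar>) \<le> a0 \<bullet> (x - z)"
            by (cases "0 \<le> a0 \<bullet> v") (simp_all add: abs_if)
        qed
        then show "\<bar>a0 \<bullet> v\<bar> \<le> a0 \<bullet> (x - z) / \<rho>" using rho0 by (simp add: field_simps)
      qed
      then show ?thesis using rho0 by (simp add: field_simps)
    qed
    let ?act = "active Ab bb z"
    have fin_act: "finite ?act" by simp
    have zfe: "\<forall>t. (Ab $ t) \<bullet> z \<le> bb $ t" using zF unfolding feas_def by simp
    have incone: "a0 \<in> cone_comb (\<lambda>t. Ab $ t) ?act"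
    proof (rule ccontr)
      assume "a0 \<notin> cone_comb (\<lambda>t. Ab $ t) ?act"
      then obtain wv where wv: "\<forall>t\<in>?act. 0 \<le> wv \<bullet> Ab $ t" "wv \<bullet> a0 < 0"
        using farkas[OF fin_act] by blast
      define v where "v = - wv"
      define Ina where "Ina = {t. (Ab $ t) \<bullet> z \<noteq> bb $ t}"
      have "\<forall>t\<in>Ina. 0 < bb $ t - (Ab $ t) \<bullet> z"
      proof
        fix t assume "t \<in> Ina"
        then have "(Ab $ t) \<bullet> z \<noteq> bb $ t" unfolding Ina_def by simp
        then show "0 < bb $ t - (Ab $ t) \<bullet> z" using zfe[rule_format, of t] by simp
      qed
      then obtain e where e: "e > 0" "\<forall>t\<in>Ina. \<forall>e'. 0 \<le> e' \<longrightarrow> e' \<le> e \<longrightarrow>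
          e' * ((Ab $ t) \<bullet> v) < bb $ t - (Ab $ t) \<bullet> z"
        using exists_small[of Ina "\<lambda>t. bb $ t - (Ab $ t) \<bullet> z" "\<lambda>t. (Ab $ t) \<bullet> v"] by auto
      have "z + e *\<^sub>R v \<in> ?F" unfolding feas_def
      proof (intro CollectI allI)
        fix t
        show "(Ab $ t) \<bullet> (z + e *\<^sub>R v) \<le> bb $ t"
        proof (cases "t \<in> Ina")
          case True
          then have "e * ((Ab $ t) \<bullet> v) < bb $ t - (Ab $ t) \<bullet> z" using e by auto
          then show ?thesis by (simp add: inner_add_right)
        next
          case False
          then have "t \<in> ?act" "(Ab $ t) \<bullet> z = bb $ t" unfolding Ina_def active_def by auto
          then have "(Ab $ t) \<bullet> v \<le> 0" using wv(1) unfolding v_def by (auto simp: inner_commute)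
          then have "e * ((Ab $ t) \<bullet> v) \<le> 0" using e(1) by (simp add: mult_nonneg_nonpos)
          then show ?thesis using \<open>(Ab $ t) \<bullet> z = bb $ t\<close> by (simp add: inner_add_right)
        qed
      qed
      then have "a0 \<bullet> (z + e *\<^sub>R v) \<le> a0 \<bullet> z" using normal by blast
      moreover have "a0 \<bullet> v > 0" using wv(2) unfolding v_def by (simp add: inner_commute)
      ultimately show False using e(1) by (simp add: inner_add_right mult_le_0_iff)
    qed
    obtain D d l where DI: "D \<subseteq> ?act" and d1: "\<forall>t\<in>D. (Ab $ t) \<bullet> d = 1"
      and d2: "\<forall>t\<in>?act - D. (Ab $ t) \<bullet> d < 1" and l0: "\<forall>t\<in>D. 0 \<le> l t"
      and aeq: "a0 = (\<Sum>t\<in>D. l t *\<^sub>R Ab $ t)"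
      using lp_lemma[OF fin_act incone] by blast
    have DD: "D \<in> Dfam Ab bb z" unfolding Dfam_def using DI d1 d2 by blast
    define L where "L = sum l D"
    have finD: "finite D" by simp
    have L0: "L > 0"
    proof -
      have "0 \<le> L" unfolding L_def using l0 by (simp add: sum_nonneg)
      moreover have "L \<noteq> 0"
      proof
        assume "L = 0"
        then have "\<forall>t\<in>D. l t = 0" using sum_nonneg_eq_0_iff[OF finD] l0 unfolding L_def by blast
        then have "a0 = 0" unfolding aeq by simp
        then show False using a0 by simp
      qed
      ultimately show ?thesis by simp
    qed
    then have Dne: "D \<noteq> {}" unfolding L_def by auto
    let ?C = "convex hull ((\<lambda>t. Ab $ t) ` D)"
    define u0 where "u0 = (\<Sum>t\<in>D. (l t / L) *\<^sub>R Ab $ t)"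
    have u0C: "u0 \<in> ?C" unfolding u0_def
    proof (rule convex_sum[OF finD convex_convex_hull])
      show "(\<Sum>i\<in>D. l i / L) = 1" using L0 unfolding L_def by (simp add: sum_divide_distrib[symmetric])
      show "\<And>i. i \<in> D \<Longrightarrow> 0 \<le> l i / L" using l0 L0 by simp
      show "\<And>i. i \<in> D \<Longrightarrow> Ab $ i \<in> ?C" by (simp add: hull_inc)
    qed
    have a0u0: "a0 = L *\<^sub>R u0" unfolding aeq u0_def using L0
      by (simp add: scaleR_sum_right)
    define \<alpha> where "\<alpha> = Inf {dn u | u. u \<in> ?C}"
    have ap: "0 < \<alpha>" "\<alpha> \<le> dn u0" "inv_dist_conv N ((\<lambda>t. Ab $ t) ` D) = inverse \<alpha>"
      using alpha_props[OF Dne d1] u0C unfolding \<alpha>_def by auto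
    have dna: "dn a0 = L * dn u0" unfolding a0u0 using L0 by (simp add: dn_scale)
    have "a0 \<bullet> (x - z) = (\<Sum>t\<in>D. l t * ((Ab $ t) \<bullet> x - bb $ t))"
    proof -
      have "a0 \<bullet> (x - z) = (\<Sum>t\<in>D. l t * ((Ab $ t) \<bullet> (x - z)))" unfolding aeq
        by (simp add: inner_sum_left)
      also have "\<dots> = (\<Sum>t\<in>D. l t * ((Ab $ t) \<bullet> x - bb $ t))"
      proof (rule sum.cong[OF refl])
        fix t assume "t \<in> D"
        then have "(Ab $ t) \<bullet> z = bb $ t" using DI unfolding active_def by auto
        then show "l t * ((Ab $ t) \<bullet> (x - z)) = l t * ((Ab $ t) \<bullet> x - bb $ t)"
          by (simp add: inner_diff_right)
      qed
      finally show ?thesis .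
    qed
    also have "\<dots> \<le> (\<Sum>t\<in>D. l t * \<gamma>)"
      by (rule sum_mono) (use l0 g in \<open>auto intro: mult_left_mono\<close>)
    also have "\<dots> = L * \<gamma>" unfolding L_def by (simp add: sum_distrib_right)
    finally have agam: "a0 \<bullet> (x - z) \<le> L * \<gamma>" .
    have "\<rho> * (L * \<alpha>) \<le> \<rho> * (L * dn u0)"
      using ap(2) L0 rho0 by (intro mult_left_mono) auto
    also have "\<dots> = \<rho> * dn a0" by (simp add: dna)
    also have "\<dots> \<le> L * \<gamma>" using dnrho agam by linarith
    finally have "L * (\<rho> * \<alpha>) \<le> L * \<gamma>" by (simp add: algebra_simps)
    then have "\<rho> * \<alpha> \<le> \<gamma>" using L0 by simp
    then have "\<rho> \<le> inverse \<alpha> * \<gamma>" using ap(1) by (simp add: field_simps)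
    also have "\<dots> \<le> Hf Ab bb z * \<gamma>"
      using Hf_ge[OF DD] ap(3) g0 by (intro mult_right_mono) auto
    finally show ?thesis .
  qed
  show ?thesis using zF infeq bound unfolding \<rho>_def by blast
qed



lemma exists_large:
  fixes c k :: "'i \<Rightarrow> real"
  assumes "finite A" "\<forall>t\<in>A. 0 < c t"
  shows "\<exists>\<mu>\<ge>0. \<forall>t\<in>A. k t < \<mu> * c t"
  using assms
proof (induction A rule: finite_induct)
  case empty then show ?case by auto
next
  case (insert a A)
  then obtain \<mu>0 where m0: "\<mu>0 \<ge> 0" "\<forall>t\<in>A. k t < \<mu>0 * c t" by auto
  have ca: "c a > 0" using insert by auto
  define \<mu> where "\<mu> = max \<mu>0 ((\<bar>k a\<bar> + 1) / c a)"
  have "\<mu>0 \<le> \<mu>" unfolding \<mu>_def by simp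
  have "\<forall>t\<in>A. k t < \<mu> * c t"
  proof
    fix t assume "t \<in> A"
    then have "k t < \<mu>0 * c t" "c t > 0" using m0 insert by auto
    moreover have "\<mu>0 * c t \<le> \<mu> * c t" using \<open>\<mu>0 \<le> \<mu>\<close> \<open>c t > 0\<close> by (simp add: mult_right_mono)
    ultimately show "k t < \<mu> * c t" by linarith
  qed
  moreover have "k a < \<mu> * c a"
  proof -
    have "(\<bar>k a\<bar> + 1) / c a \<le> \<mu>" unfolding \<mu>_def by simp
    then have "(\<bar>k a\<bar> + 1) \<le> \<mu> * c a" using ca by (simp add: field_simps)
    then show ?thesis by linarith
  qed
  moreover have "\<mu> \<ge> 0" using m0 unfolding \<mu>_def by simp
  ultimately show ?case by auto
qed

lemma seg_eq:
  fixes u p q B :: real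
  assumes "0 < u" "u < 1" "p \<le> B" "q \<le> B" "(1 - u) * p + u * q = B"
  shows "p = B \<and> q = B"
proof -
  have e: "(1 - u) * (B - p) + u * (B - q) = 0" using assms(5) by (simp add: algebra_simps)
  have n1: "0 \<le> (1 - u) * (B - p)" using assms by simp
  have n2: "0 \<le> u * (B - q)" using assms by simp
  have "(1 - u) * (B - p) = 0" "u * (B - q) = 0" using e n1 n2 by linarith+
  then show ?thesis using assms(1,2) by simp
qed

lemma span_rows_UNIV:
  fixes Ab :: "real^'n^'m::finite"
  assumes Fne: "feas Ab bb \<noteq> {}" and Fb: "bounded (feas Ab bb)"
  shows "span (range (\<lambda>t. Ab $ t)) = UNIV"
proof (rule ccontr)
  assume ne: "span (range (\<lambda>t. Ab $ t)) \<noteq> UNIV"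
  then have "span (range (\<lambda>t. Ab $ t)) \<subset> span UNIV" by (simp add: span_UNIV psubsetI)
  then obtain v :: "real^'n" where v: "v \<noteq> 0" "\<And>y. y \<in> span (range (\<lambda>t. Ab $ t)) \<Longrightarrow> orthogonal v y"
    using orthogonal_to_subspace_exists_gen by blast
  have va: "(Ab $ t) \<bullet> v = 0" for t
    using v(2)[of "Ab $ t"] by (simp add: span_base orthogonal_def inner_commute)
  obtain z where zF: "z \<in> feas Ab bb" using Fne by blast
  have inF: "z + k *\<^sub>R v \<in> feas Ab bb" for k
    using zF va unfolding feas_def by (simp add: inner_add_right)
  obtain B where B: "\<forall>x\<in>feas Ab bb. norm x \<le> B" using Fb unfolding bounded_iff by blast
  define k where "k = (B + norm z + 1) / norm v"
  have nv: "norm v > 0" using v(1) by simp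
  have "norm (k *\<^sub>R v) = B + norm z + 1"
    unfolding k_def using nv B zF by (auto simp: field_simps) (smt (verit) norm_ge_zero)
  moreover have "norm (k *\<^sub>R v) \<le> norm (z + k *\<^sub>R v) + norm z"
    using norm_triangle_ineq4[of "z + k *\<^sub>R v" z] by simp
  moreover have "norm (z + k *\<^sub>R v) \<le> B" using B inF by blast
  ultimately show False by linarith
qed

lemma Dfam_mono:
  fixes Ab :: "real^'n^'m::finite"
  assumes zF: "z \<in> feas Ab bb" and vF: "v \<in> feas Ab bb"
    and sub: "active Ab bb z \<subseteq> active Ab bb v"
  shows "Dfam Ab bb z \<subseteq> Dfam Ab bb v"
proof
  fix D assume "D \<in> Dfam Ab bb z"
  then obtain d where Dz: "D \<subseteq> active Ab bb z" and d1: "\<forall>t\<in>D. (Ab $ t) \<bullet> d = 1"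
    and d2: "\<forall>t \<in> active Ab bb z - D. (Ab $ t) \<bullet> d < 1"
    unfolding Dfam_def by blast
  let ?J = "active Ab bb v - active Ab bb z"
  have "\<forall>t\<in>?J. 0 < bb $ t - (Ab $ t) \<bullet> z"
  proof
    fix t assume "t \<in> ?J"
    then have "(Ab $ t) \<bullet> z \<noteq> bb $ t" unfolding active_def by simp
    moreover have "(Ab $ t) \<bullet> z \<le> bb $ t" using zF unfolding feas_def by simp
    ultimately show "0 < bb $ t - (Ab $ t) \<bullet> z" by simp
  qed
  then obtain \<mu> where mu: "\<mu> \<ge> 0" "\<forall>t\<in>?J. (Ab $ t) \<bullet> d - 1 < \<mu> * (bb $ t - (Ab $ t) \<bullet> z)"
    using exists_large[of ?J "\<lambda>t. bb $ t - (Ab $ t) \<bullet> z" "\<lambda>t. (Ab $ t) \<bullet> d - 1"] by auto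
  define d' where "d' = d + \<mu> *\<^sub>R (z - v)"
  have same: "(Ab $ t) \<bullet> d' = (Ab $ t) \<bullet> d" if "t \<in> active Ab bb z" for t
  proof -
    have "t \<in> active Ab bb v" using that sub by blast
    then have "(Ab $ t) \<bullet> v = bb $ t" "(Ab $ t) \<bullet> z = bb $ t" using that unfolding active_def by auto
    then show ?thesis unfolding d'_def by (simp add: inner_add_right inner_diff_right)
  qed
  have "D \<subseteq> active Ab bb v" using Dz sub by blast
  moreover have "\<forall>t\<in>D. (Ab $ t) \<bullet> d' = 1" using d1 same Dz by auto
  moreover have "\<forall>t \<in> active Ab bb v - D. (Ab $ t) \<bullet> d' < 1"
  proof
    fix t assume t: "t \<in> active Ab bb v - D"
    show "(Ab $ t) \<bullet> d' < 1"
    proof (cases "t \<in> active Ab bb z")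
      case True then show ?thesis using same d2 t by auto
    next
      case False
      then have tJ: "t \<in> ?J" using t by blast
      then have "(Ab $ t) \<bullet> v = bb $ t" unfolding active_def by simp
      then have "(Ab $ t) \<bullet> d' = (Ab $ t) \<bullet> d - \<mu> * (bb $ t - (Ab $ t) \<bullet> z)"
        unfolding d'_def by (simp add: inner_add_right inner_diff_right algebra_simps)
      then show ?thesis using mu(2) tJ by force
    qed
  qed
  ultimately show "D \<in> Dfam Ab bb v" unfolding Dfam_def by blast
qed

lemma Hf_mono:
  fixes Ab :: "real^'n^'m::finite"
  assumes "Dfam Ab bb z \<subseteq> Dfam Ab bb v"
  shows "Hf Ab bb z \<le> Hf Ab bb v"
  unfolding Hf_def
  by (rule Max_mono) (use assms Dfam_empty[of Ab bb z] in \<open>auto simp: Setcompr_eq_image finite_Dfam\<close>)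

lemma polyhedron_feas: "polyhedron (feas (A :: real^'k^'m::finite) b)"
proof -
  have "feas A b = \<Inter> (range (\<lambda>t. {x. A $ t \<bullet> x \<le> b $ t}))" unfolding feas_def by auto
  then show ?thesis by (auto intro!: polyhedron_Inter polyhedron_halfspace_le)
qed

lemma face_bound:
  fixes Ab :: "real^'n^'m::finite"
  assumes Fne: "feas Ab bb \<noteq> {}" and Fb: "bounded (feas Ab bb)" and zF: "z \<in> feas Ab bb"
  defines "M \<equiv> Max {(N x + 1) * Hf Ab bb x | x. x \<in> Eset Ab bb}"
  shows "(1 + N z) * Hf Ab bb z \<le> M"
proof -
  let ?F = "feas Ab bb"
  have Eeq: "Eset Ab bb = {x. x extreme_point_of ?F}"
    unfolding Eset_def span_rows_UNIV[OF Fne Fb] by simp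
  have finE: "finite (Eset Ab bb)" unfolding Eeq by (rule finite_polyhedron_extreme_points[OF polyhedron_feas])
  let ?I = "active Ab bb z"
  define \<Phi> where "\<Phi> = {w \<in> ?F. \<forall>t\<in>?I. (Ab $ t) \<bullet> w = bb $ t}"
  have PhiF: "\<Phi> \<subseteq> ?F" unfolding \<Phi>_def by auto
  have zPhi: "z \<in> \<Phi>" unfolding \<Phi>_def active_def using zF by auto
  have clPhi: "closed \<Phi>"
  proof -
    have "\<Phi> = ?F \<inter> (\<Inter>t\<in>?I. {w. (Ab $ t) \<bullet> w = bb $ t})" unfolding \<Phi>_def by auto
    then show ?thesis using closed_feas by (auto intro!: closed_Int closed_INT closed_hyperplane)
  qed
  have cPhi: "compact \<Phi>"
    using clPhi Fb PhiF by (meson bounded_subset compact_eq_bounded_closed)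
  have cvPhi: "convex \<Phi>"
  proof -
    have "\<Phi> = ?F \<inter> (\<Inter>t\<in>?I. {w. (Ab $ t) \<bullet> w = bb $ t})" unfolding \<Phi>_def by auto
    then show ?thesis using convex_feas by (auto intro!: convex_Int convex_INT convex_hyperplane)
  qed
  have KM: "\<Phi> = convex hull {v. v extreme_point_of \<Phi>}"
    by (rule Krein_Milman_Minkowski[OF cPhi cvPhi])
  have ext: "v \<in> Eset Ab bb \<and> Hf Ab bb z \<le> Hf Ab bb v" if "v extreme_point_of \<Phi>" for v
  proof -
    have vPhi: "v \<in> \<Phi>" using that unfolding extreme_point_of_def by blast
    then have vF: "v \<in> ?F" using PhiF by blast
    have actsub: "?I \<subseteq> active Ab bb v" using vPhi unfolding \<Phi>_def active_def by auto
    have "v extreme_point_of ?F"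
      unfolding extreme_point_of_def
    proof (intro conjI ballI vF)
      fix a b assume aF: "a \<in> ?F" and bF: "b \<in> ?F"
      show "v \<notin> open_segment a b"
      proof
        assume "v \<in> open_segment a b"
        then obtain u where ab: "a \<noteq> b" "0 < u" "u < 1" "v = (1 - u) *\<^sub>R a + u *\<^sub>R b"
          by (auto simp: in_segment)
        have "a \<in> \<Phi> \<and> b \<in> \<Phi>"
        proof -
          have "\<forall>t\<in>?I. (Ab $ t) \<bullet> a = bb $ t \<and> (Ab $ t) \<bullet> b = bb $ t"
          proof
            fix t assume tI: "t \<in> ?I"
            have "(Ab $ t) \<bullet> v = bb $ t" using vPhi tI unfolding \<Phi>_def by auto
            then have "(1 - u) * ((Ab $ t) \<bullet> a) + u * ((Ab $ t) \<bullet> b) = bb $ t"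
              using ab(4) by (simp add: inner_add_right)
            moreover have "(Ab $ t) \<bullet> a \<le> bb $ t" "(Ab $ t) \<bullet> b \<le> bb $ t"
              using aF bF unfolding feas_def by auto
            ultimately show "(Ab $ t) \<bullet> a = bb $ t \<and> (Ab $ t) \<bullet> b = bb $ t"
              using seg_eq[OF ab(2,3)] by blast
          qed
          then show ?thesis unfolding \<Phi>_def using aF bF by auto
        qed
        then show False using that \<open>v \<in> open_segment a b\<close> unfolding extreme_point_of_def by blast
      qed
    qed
    then have "v \<in> Eset Ab bb" unfolding Eeq by simp
    moreover have "Hf Ab bb z \<le> Hf Ab bb v" by (rule Hf_mono[OF Dfam_mono[OF zF vF actsub]])
    ultimately show ?thesis by blast
  qed
  have Mge: "(N v + 1) * Hf Ab bb v \<le> M" if "v \<in> Eset Ab bb" for v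
    unfolding M_def by (rule Max_ge) (use finE that in \<open>auto simp: Setcompr_eq_image\<close>)
  show ?thesis
  proof (cases "Hf Ab bb z = 0")
    case True
    have "{v. v extreme_point_of \<Phi>} \<noteq> {}"
    proof
      assume "{v. v extreme_point_of \<Phi>} = {}"
      then have "\<Phi> = {}" using KM by simp
      then show False using zPhi by simp
    qed
    then obtain v where "v extreme_point_of \<Phi>" by blast
    then have "v \<in> Eset Ab bb" using ext by blast
    then have "(N v + 1) * Hf Ab bb v \<le> M" by (rule Mge)
    moreover have "0 \<le> (N v + 1) * Hf Ab bb v" using N_nonneg[of v] Hf_nonneg[of Ab bb v] by simp
    ultimately show ?thesis using True by simp
  next
    case False
    then have Hp: "Hf Ab bb z > 0" using Hf_nonneg[of Ab bb z] by simp
    define K where "K = M / Hf Ab bb z - 1"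
    have "{v. v extreme_point_of \<Phi>} \<subseteq> {y. N y \<le> K}"
    proof
      fix v assume "v \<in> {v. v extreme_point_of \<Phi>}"
      then have v: "v \<in> Eset Ab bb" "Hf Ab bb z \<le> Hf Ab bb v" using ext by auto
      have "(N v + 1) * Hf Ab bb z \<le> (N v + 1) * Hf Ab bb v"
        using v(2) N_nonneg[of v] by (intro mult_left_mono) auto
      also have "\<dots> \<le> M" by (rule Mge[OF v(1)])
      finally have "N v + 1 \<le> M / Hf Ab bb z" using Hp by (simp add: field_simps)
      then show "v \<in> {y. N y \<le> K}" unfolding K_def by simp
    qed
    then have "convex hull {v. v extreme_point_of \<Phi>} \<subseteq> {y. N y \<le> K}"
      by (rule hull_minimal) (rule N_convex)
    then have "N z \<le> K" using KM zPhi by auto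
    then have "1 + N z \<le> M / Hf Ab bb z" unfolding K_def by simp
    then show ?thesis using Hp by (simp add: field_simps)
  qed
qed


lemma upper_valid:
  fixes Ab :: "real^'n^'m::finite"
  assumes Fne: "feas Ab bb \<noteq> {}" and Fb: "bounded (feas Ab bb)"
    and kM: "Max {(N x + 1) * Hf Ab bb x | x. x \<in> Eset Ab bb} < \<kappa>"
  shows "\<exists>\<epsilon>>0. \<forall>A b. param_norm N (A - Ab) (b - bb) < \<epsilon> \<longrightarrow>
        (\<forall>x \<in> feas A b. Inf {N (x - z) | z. z \<in> feas Ab bb} \<le> \<kappa> * param_norm N (A - Ab) (b - bb))"
proof -
  define M where "M = Max {(N x + 1) * Hf Ab bb x | x. x \<in> Eset Ab bb}"
  have kM': "M < \<kappa>" using kM unfolding M_def .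
  have Fc: "compact (feas Ab bb)" using Fb closed_feas by (simp add: compact_eq_bounded_closed)
  obtain z0 where z0: "z0 \<in> feas Ab bb" using Fne by blast
  have M0: "0 \<le> M"
  proof -
    have "0 \<le> (1 + N z0) * Hf Ab bb z0" using N_nonneg[of z0] Hf_nonneg[of Ab bb z0] by simp
    also have "\<dots> \<le> M" unfolding M_def by (rule face_bound[OF Fne Fb z0])
    finally show ?thesis .
  qed
  have k0: "\<kappa> > 0" using M0 kM' by simp
  define Hall where "Hall = (\<Sum>D\<in>(UNIV :: 'm set set). inv_dist_conv N ((\<lambda>t. Ab $ t) ` D))"
  have Hall0: "0 \<le> Hall" unfolding Hall_def by (rule sum_nonneg) (simp add: inv_dist_conv_nonneg)
  have HfHall: "Hf Ab bb z \<le> Hall" for z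
  proof -
    have "Hf Ab bb z \<in> {inv_dist_conv N ((\<lambda>t. Ab $ t) ` D) | D. D \<in> Dfam Ab bb z}"
      unfolding Hf_def by (rule Max_in) (use Dfam_empty[of Ab bb z] in \<open>auto simp: Setcompr_eq_image finite_Dfam\<close>)
    then obtain D0 where "Hf Ab bb z = inv_dist_conv N ((\<lambda>t. Ab $ t) ` D0)" by blast
    also have "\<dots> \<le> Hall" unfolding Hall_def
      by (rule member_le_sum) (auto simp: inv_dist_conv_nonneg)
    finally show ?thesis .
  qed
  define \<epsilon> where "\<epsilon> = (\<kappa> - M) / (\<kappa> * Hall + 1)"
  have kH: "0 \<le> \<kappa> * Hall" using k0 Hall0 by simp
  have e0: "\<epsilon> > 0" unfolding \<epsilon>_def using kM' kH by simp
  have eeq: "\<epsilon> * (\<kappa> * Hall + 1) = \<kappa> - M" unfolding \<epsilon>_def using kH by simp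
  show ?thesis
  proof (intro exI[of _ \<epsilon>] conjI e0 allI impI ballI)
    fix A :: "real^'n^'m" and b :: "real^'m" and x
    assume dl: "param_norm N (A - Ab) (b - bb) < \<epsilon>" and xF: "x \<in> feas A b"
    define \<delta> where "\<delta> = param_norm N (A - Ab) (b - bb)"
    have comp: "max (dn ((A - Ab) $ t)) \<bar>(b - bb) $ t\<bar> \<le> \<delta>" for t
      unfolding \<delta>_def param_norm_def by (rule Max_ge) simp_all
    then have cA: "dn (A $ t - Ab $ t) \<le> \<delta>" and cb: "\<bar>b $ t - bb $ t\<bar> \<le> \<delta>" for t
      using comp[of t] by auto
    have d0: "0 \<le> \<delta>" using cb[of undefined] by linarith
    have dle: "\<delta> < \<epsilon>" using dl unfolding \<delta>_def .
    have g: "\<forall>t. (Ab $ t) \<bullet> x - bb $ t \<le> \<delta> * (1 + N x)"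
    proof
      fix t
      have "A $ t \<bullet> x \<le> b $ t" using xF unfolding feas_def by simp
      moreover have "\<bar>(A $ t - Ab $ t) \<bullet> x\<bar> \<le> \<delta> * N x"
      proof -
        have "\<bar>(A $ t - Ab $ t) \<bullet> x\<bar> \<le> dn (A $ t - Ab $ t) * N x" by (rule dn_ineq)
        also have "\<dots> \<le> \<delta> * N x" using cA[of t] N_nonneg[of x] by (rule mult_right_mono)
        finally show ?thesis .
      qed
      moreover have "(Ab $ t) \<bullet> x - bb $ t = (A $ t \<bullet> x - b $ t) - (A $ t - Ab $ t) \<bullet> x + (b $ t - bb $ t)"
        by (simp add: inner_diff_left)
      moreover have "- ((A $ t - Ab $ t) \<bullet> x) \<le> \<delta> * N x" using calculation(2) by (rule abs_le_D2)
      moreover have "b $ t - bb $ t \<le> \<delta>" using cb[of t] by (rule abs_le_D1)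
      ultimately have "(Ab $ t) \<bullet> x - bb $ t \<le> \<delta> + \<delta> * N x" by linarith
      then show "(Ab $ t) \<bullet> x - bb $ t \<le> \<delta> * (1 + N x)" by (simp add: distrib_left)
    qed
    have g0: "0 \<le> \<delta> * (1 + N x)" using d0 N_nonneg[of x] by simp
    obtain z where zF: "z \<in> feas Ab bb" and infeq: "Inf {N (x - z') | z'. z' \<in> feas Ab bb} = N (x - z)"
      and rb: "N (x - z) \<le> Hf Ab bb z * (\<delta> * (1 + N x))"
      using error_bound[OF Fne Fc g g0] by blast
    define \<rho> where "\<rho> = N (x - z)"
    define H where "H = Hf Ab bb z"
    have H0: "0 \<le> H" unfolding H_def by (rule Hf_nonneg)
    have HH: "H \<le> Hall" unfolding H_def by (rule HfHall)
    have fb: "(1 + N z) * H \<le> M" unfolding H_def M_def by (rule face_bound[OF Fne Fb zF])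
    have rho0: "0 \<le> \<rho>" unfolding \<rho>_def by (rule N_nonneg)
    have Nx: "N x \<le> N z + \<rho>" unfolding \<rho>_def by (rule N_rev_tri)
    have "\<rho> \<le> H * \<delta> * (1 + N x)" using rb unfolding \<rho>_def H_def by (simp add: mult.assoc)
    also have "\<dots> \<le> H * \<delta> * (1 + N z + \<rho>)"
      using Nx H0 d0 by (intro mult_left_mono) auto
    also have "\<dots> = \<delta> * ((1 + N z) * H) + H * \<delta> * \<rho>" by (simp add: algebra_simps)
    also have "\<dots> \<le> \<delta> * M + Hall * \<delta> * \<rho>"
    proof (rule add_mono)
      show "\<delta> * ((1 + N z) * H) \<le> \<delta> * M" using fb d0 by (rule mult_left_mono)
      show "H * \<delta> * \<rho> \<le> Hall * \<delta> * \<rho>" using HH d0 rho0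
        by (intro mult_right_mono) auto
    qed
    finally have r1: "\<rho> * (1 - Hall * \<delta>) \<le> \<delta> * M" by (simp add: algebra_simps)
    have "\<kappa> * Hall * \<delta> \<le> \<kappa> * Hall * \<epsilon>" using kH dle by (intro mult_left_mono) auto
    also have "\<dots> = \<kappa> - M - \<epsilon>" using eeq by (simp add: algebra_simps)
    finally have "\<kappa> * Hall * \<delta> < \<kappa> - M" using e0 by simp
    then have kq: "M < \<kappa> * (1 - Hall * \<delta>)" by (simp add: algebra_simps)
    then have "0 < \<kappa> * (1 - Hall * \<delta>)" using M0 by linarith
    then have q0: "0 < 1 - Hall * \<delta>" using k0 by (simp add: zero_less_mult_iff)
    have "\<rho> \<le> \<kappa> * \<delta>"
    proof (rule ccontr)
      assume "\<not> \<rho> \<le> \<kappa> * \<delta>"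
      then have "\<kappa> * \<delta> * (1 - Hall * \<delta>) < \<rho> * (1 - Hall * \<delta>)" using q0 by simp
      moreover have "\<delta> * M \<le> \<delta> * (\<kappa> * (1 - Hall * \<delta>))" using kq d0 by (intro mult_left_mono) auto
      ultimately show False using r1 by (simp add: algebra_simps)
    qed
    then show "Inf {N (x - z) | z. z \<in> feas Ab bb} \<le> \<kappa> * param_norm N (A - Ab) (b - bb)"
      using infeq unfolding \<rho>_def \<delta>_def by simp
  qed
qed

lemma final_aux:
  fixes Ab :: "real^'n^'m::finite" and bb :: "real^'m"
  assumes Fne: "feas Ab bb \<noteq> {}" and Fb: "bounded (feas Ab bb)"
  shows "Lipusc N Ab bb =
    ereal (Max {(N x + 1) * Max {inv_dist_conv N ((\<lambda>t. Ab $ t) ` D) | D. D \<in> Dfam Ab bb x}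
                | x. x \<in> Eset Ab bb})"
proof -
  let ?F = "feas Ab bb"
  have Hfe: "\<And>x. Max {inv_dist_conv N ((\<lambda>t. Ab $ t) ` D) | D. D \<in> Dfam Ab bb x} = Hf Ab bb x"
    by (simp add: Hf_def)
  define M where "M = Max {(N x + 1) * Hf Ab bb x | x. x \<in> Eset Ab bb}"
  have Eeq: "Eset Ab bb = {x. x extreme_point_of ?F}"
    unfolding Eset_def span_rows_UNIV[OF Fne Fb] by simp
  have finE: "finite (Eset Ab bb)" unfolding Eeq by (rule finite_polyhedron_extreme_points[OF polyhedron_feas])
  have Fc: "compact ?F" using Fb closed_feas by (simp add: compact_eq_bounded_closed)
  have KM: "?F = convex hull {v. v extreme_point_of ?F}"
    by (rule Krein_Milman_Minkowski[OF Fc convex_feas])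
  have Ene: "Eset Ab bb \<noteq> {}"
  proof
    assume "Eset Ab bb = {}"
    then have "?F = {}" using KM Eeq by simp
    then show False using Fne by simp
  qed
  let ?KS = "{ereal \<kappa> | \<kappa>. 0 \<le> \<kappa> \<and>
     (\<exists>\<epsilon>>0. \<forall>A b. param_norm N (A - Ab) (b - bb) < \<epsilon> \<longrightarrow>
        (\<forall>x \<in> feas A b. Inf {N (x - z) | z. z \<in> feas Ab bb} \<le> \<kappa> * param_norm N (A - Ab) (b - bb)))}"
  have lower: "ereal M \<le> Inf ?KS"
  proof (rule Inf_greatest)
    fix k assume "k \<in> ?KS"
    then obtain \<kappa> \<epsilon> where k: "k = ereal \<kappa>" "0 \<le> \<kappa>" "\<epsilon> > 0"
      and V: "\<forall>A b. param_norm N (A - Ab) (b - bb) < \<epsilon> \<longrightarrow>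
        (\<forall>x \<in> feas A b. Inf {N (x - z) | z. z \<in> feas Ab bb} \<le> \<kappa> * param_norm N (A - Ab) (b - bb))"
      by blast
    have "M \<in> {(N x + 1) * Hf Ab bb x | x. x \<in> Eset Ab bb}"
      unfolding M_def by (rule Max_in) (use finE Ene in \<open>auto simp: Setcompr_eq_image\<close>)
    then obtain x where xE: "x \<in> Eset Ab bb" and Mx: "M = (N x + 1) * Hf Ab bb x" by blast
    have "Hf Ab bb x \<in> {inv_dist_conv N ((\<lambda>t. Ab $ t) ` D) | D. D \<in> Dfam Ab bb x}"
      unfolding Hf_def by (rule Max_in) (use Dfam_empty[of Ab bb x] in \<open>auto simp: Setcompr_eq_image finite_Dfam\<close>)
    then obtain D where DD: "D \<in> Dfam Ab bb x" and HD: "Hf Ab bb x = inv_dist_conv N ((\<lambda>t. Ab $ t) ` D)" by blast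
    have xF: "x \<in> ?F" using xE unfolding Eeq extreme_point_of_def by blast
    have "M \<le> \<kappa>" unfolding Mx HD by (rule lower_bound[OF xF DD k(2) k(3) V])
    then show "ereal M \<le> k" using k(1) by simp
  qed
  have upper: "Inf ?KS \<le> ereal M"
  proof (rule dense_ge)
    fix y assume My: "ereal M < y"
    show "Inf ?KS \<le> y"
    proof (cases y)
      case (real r)
      then have rM: "M < r" using My by simp
      have M0: "0 \<le> M"
      proof -
        obtain z0 where z0: "z0 \<in> ?F" using Fne by blast
        have "0 \<le> (1 + N z0) * Hf Ab bb z0" using N_nonneg[of z0] Hf_nonneg[of Ab bb z0] by simp
        also have "\<dots> \<le> M" unfolding M_def by (rule face_bound[OF Fne Fb z0])
        finally show ?thesis .
      qed
      have r0: "0 \<le> r" using rM M0 by simp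
      obtain \<epsilon> where eps: "\<epsilon> > 0" "\<forall>A b. param_norm N (A - Ab) (b - bb) < \<epsilon> \<longrightarrow>
        (\<forall>x \<in> feas A b. Inf {N (x - z) | z. z \<in> feas Ab bb} \<le> r * param_norm N (A - Ab) (b - bb))"
        using upper_valid[OF Fne Fb rM[unfolded M_def]] by blast
      have "ereal r \<in> ?KS" using r0 eps by blast
      then show ?thesis unfolding real by (rule Inf_lower)
    next
      case PInf then show ?thesis by simp
    next
      case MInf then show ?thesis using My by simp
    qed
  qed
  have "Lipusc N Ab bb = ereal M" unfolding Lipusc_def using lower upper by (rule antisym[rotated])
  then show ?thesis unfolding Hfe M_def .
qed


end

theorem corollary1:
  fixes N :: "real^'n::finite \<Rightarrow> real"
    and Ab :: "real^'n^'m::finite" and bb :: "real^'m"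
  assumes "is_norm N"
    and "feas Ab bb \<noteq> {}" and "bounded (feas Ab bb)"
  shows "Lipusc N Ab bb =
    ereal (Max {(N x + 1) * Max {inv_dist_conv N ((\<lambda>t. Ab $ t) ` D) | D. D \<in> Dfam Ab bb x}
                | x. x \<in> Eset Ab bb})"
  using final_aux[OF assms(1) assms(2) assms(3)] .

end
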